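(* Let $\Sigma_\pm$ be nondecreasing scalar functions satisfying $\int_\mathbb R (1+t^2)^{-1}d\Sigma_\pm<\infty$, $\int_\mathbb R d\Sigma_\pm=\infty$, $\Sigma_\pm(t)=\frac12(\Sigma_\pm(t-0)+\Sigma_\pm(t+0))$, $\Sigma_\pm(0)=0$, and let $C_\pm$ be real constants such that \[ \int_\mathbb R (1+|t|)^{-1} d\Sigma_\pm < \infty , \qquad C_\pm = \int_\mathbb R t(1+t^2)^{-1} d\Sigma_\pm . \] Then for $\widehat A = \widehat A \{ \Sigma_+ , C_+ , \Sigma_- , C_- \}$: 1) If $\lambda \in \mathfrak{A}_0 (\Sigma_+) \cup \mathfrak{A}_0 (\Sigma_-)$, then $ \lambda \not \in \sigma_p (\widehat A)$. 2) If $\lambda \in \mathfrak{A}_p (\Sigma_+) \cap \mathfrak{A}_p (\Sigma_-)$, then (i) $\lambda$ is an eigenvalue of $\widehat A$ of geometric multiplicity 1; (ii) $\lambda$ is simple if and only if at least one of the following fails: \[ d\Sigma_- (\{ \lambda \} ) = d\Sigma_+ ( \{ \lambda \} ),\quad \int_{\mathbb R \setminus \{\lambda \}} \frac{d \Sigma_+ (t)}{|t-\lambda |^2} < \infty ,\quad \int_{\mathbb R \setminus \{\lambda \}} \frac{d \Sigma_- (t)}{|t-\lambda |^2} < \infty ; \] (iii) if these three conditions hold, the algebraic multiplicity of $\lambda$ is the greatest $k\in\{2,3,\dots\}\cup\{+\infty\}$ such that \[ \int_{\mathbb R \setminus \{\lambda \}} \frac{d \Sigma_\pm (t)}{|t-\lambda|^{2j}}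 < \infty ,\qquad \int_{\mathbb R \setminus \{\lambda \}} \frac{d\Sigma_- (t)}{(t-\lambda )^{j-1}} = \int_{\mathbb R \setminus \{\lambda \}} \frac{d\Sigma_+ (t)}{(t-\lambda )^{j-1}} \] hold for all natural $2 \leq j \leq k-1$ (in particular $k=2$ if one of them fails for $j=2$). 3) If $\lambda \in \mathfrak{A}_r (\Sigma_+) \cap \mathfrak{A}_r (\Sigma_-)$, then $\lambda \in \sigma_p (\widehat A)$ iff $\int_\mathbb R \frac{d\Sigma_+ (t)}{t-\lambda} = \int_\mathbb R \frac{d\Sigma_- (t)}{t-\lambda}$. In this case the geometric multiplicity is 1 and the algebraic multiplicity is the greatest $k\in\{1,2,\dots\}\cup\{+\infty\}$ such that $\int_{\mathbb R} |t-\lambda |^{-2j} d \Sigma_\pm (t) < \infty$ and $\int_{\mathbb R } (t-\lambda )^{-j} d\Sigma_- (t) = \int_{\mathbb R } (t-\lambda )^{-j} d\Sigma_+ (t)$ for all $1 \leq j \leq k$. 4) If $\lambda \in \mathfrak{A}_p (\Sigma_+) \cap \mathfrak{A}_r (\Sigma_-)$ or $\lambda \in \mathfrak{A}_p (\Sigma_-) \cap \mathfrak{A}_r (\Sigma_+)$, then $\lambda \not \in \sigma_p (\widehat A)$.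
   Context: $Q_\Sigma$ is multiplication by $t$ in $L^2(\mathbb R,d\Sigma)$ on its natural domain; $\sigma_c(S):=\{\lambda\notin\sigma_p(S): \operatorname{ran}(S-\lambda)\ne\overline{\operatorname{ran}(S-\lambda)}=H\}$. Sets: $\mathfrak A_0(\Sigma)=\{\lambda\in\sigma_c(Q_\Sigma): \int|t-\lambda|^{-2}d\Sigma=\infty\}$, $\mathfrak A_r(\Sigma)=\{\lambda\notin\sigma_p(Q_\Sigma):\int|t-\lambda|^{-2}d\Sigma<\infty\}$, $\mathfrak A_p(\Sigma)=\sigma_p(Q_\Sigma)$ (the jump points of $\Sigma$); $d\Sigma(\{\lambda\})=\Sigma(\lambda+0)-\Sigma(\lambda-0)$. $T_\Sigma^*$ has domain $\{f=f_Q+\mathfrak c\,t(t^2+1)^{-1}: f_Q\in\operatorname{dom}(Q_\Sigma),\mathfrak c\in\mathbb C\}$, $T_\Sigma^*f=tf_Q-\mathfrak c(t^2+1)^{-1}$; $\Gamma_0^\Sigma f=\mathfrak c$, $\Gamma_1^{\Sigma,C}f=\mathfrak cC+\int f_Q\,d\Sigma$. $\widehat A\{\Sigma_+,C_+,\Sigma_-,C_-\}$ is the restriction of $T_{\Sigma_+}^*\oplus T_{\Sigma_-}^*$ in $L^2(\mathbb R,d\Sigma_+)\oplus L^2(\mathbb R,d\Sigma_-)$ to $\{f_++f_-: \Gamma_0^{\Sigma_+}f_+=\Gamma_0^{\Sigma_-}f_-,\ \Gamma_1^{\Sigma_+,C_+}f_+=\Gamma_1^{\Sigma_-,C_-}f_-\}$.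 *)

theory Defs
  imports "HOL-Analysis.Analysis"
begin

text \<open>d\<Sigma> is the Lebesgue--Stieltjes measure of the nondecreasing function \<Sigma>,
  i.e. the measure with d\<Sigma>((a,b]) = \<Sigma>(b+0) - \<Sigma>(a+0).\<close>
definition LS_measure :: "(real \<Rightarrow> real) \<Rightarrow> real measure" where
  "LS_measure S = interval_measure (\<lambda>x. Lim (at_right x) S)"

definition L2 :: "real measure \<Rightarrow> (real \<Rightarrow> complex) \<Rightarrow> bool" where
  "L2 M f \<longleftrightarrow> f \<in> borel_measurable M \<and> integrable M (\<lambda>t. (cmod (f t))^2)"

definition nullf :: "real measure \<Rightarrow> (real \<Rightarrow> complex) \<Rightarrow> bool" where
  "nullf M f \<longleftrightarrow> (AE t in M. f t = 0)"

definition domQ :: "real measure \<Rightarrow> (real \<Rightarrow> complex) \<Rightarrow> bool" where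
  "domQ M f \<longleftrightarrow> L2 M f \<and> L2 M (\<lambda>t. complex_of_real t * f t)"

definition sigma_p_Q :: "real measure \<Rightarrow> complex set" where
  "sigma_p_Q M = {z. \<exists>f. domQ M f \<and> \<not> nullf M f \<and> nullf M (\<lambda>t. (complex_of_real t - z) * f t)}"

definition ran_Q_minus :: "real measure \<Rightarrow> complex \<Rightarrow> (real \<Rightarrow> complex) set" where
  "ran_Q_minus M z = {g. L2 M g \<and> (\<exists>f. domQ M f \<and> (AE t in M. g t = (complex_of_real t - z) * f t))}"

definition dense_L2 :: "real measure \<Rightarrow> (real \<Rightarrow> complex) set \<Rightarrow> bool" where
  "dense_L2 M S \<longleftrightarrow> (\<forall>g. L2 M g \<longrightarrow> (\<forall>\<epsilon>>0. \<exists>h\<in>S.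
       (\<integral>\<^sup>+ t. ennreal ((cmod (g t - h t))^2) \<partial>M) < ennreal \<epsilon>))"

definition sigma_c_Q :: "real measure \<Rightarrow> complex set" where
  "sigma_c_Q M = {z. z \<notin> sigma_p_Q M \<and> dense_L2 M (ran_Q_minus M z)
       \<and> (\<exists>g. L2 M g \<and> g \<notin> ran_Q_minus M z)}"

definition A0 :: "real measure \<Rightarrow> complex set" where
  "A0 M = {z \<in> sigma_c_Q M. (\<integral>\<^sup>+ t. ennreal (1 / (cmod (complex_of_real t - z))^2) \<partial>M) = \<infinity>}"

definition Ar :: "real measure \<Rightarrow> complex set" where
  "Ar M = {z. z \<notin> sigma_p_Q M \<and> (\<integral>\<^sup>+ t. ennreal (1 / (cmod (complex_of_real t - z))^2) \<partial>M) < \<infinity>}"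

definition Ap :: "real measure \<Rightarrow> complex set" where
  "Ap M = sigma_p_Q M"

text \<open>f = f_Q + c t/(t^2+1) with f_Q in dom(Q_\<Sigma>); T^* f = t f_Q - c/(t^2+1).\<close>
definition Tstar_decomp :: "real measure \<Rightarrow> (real \<Rightarrow> complex) \<Rightarrow> (real \<Rightarrow> complex) \<Rightarrow> complex \<Rightarrow> bool" where
  "Tstar_decomp M f fQ c \<longleftrightarrow> L2 M f \<and> domQ M fQ \<and>
     (AE t in M. f t = fQ t + c * complex_of_real (t / (t^2 + 1)))"

definition Tstar_image :: "real measure \<Rightarrow> (real \<Rightarrow> complex) \<Rightarrow> (real \<Rightarrow> complex) \<Rightarrow> complex \<Rightarrow> bool" where
  "Tstar_image M g fQ c \<longleftrightarrow> L2 M g \<and>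
     (AE t in M. g t = complex_of_real t * fQ t - c * complex_of_real (1 / (t^2 + 1)))"

type_synonym vec = "(real \<Rightarrow> complex) \<times> (real \<Rightarrow> complex)"

text \<open>Graph of \<widehat>A{\<Sigma>+,C+,\<Sigma>-,C-} in L^2(d\<Sigma>+) \<oplus> L^2(d\<Sigma>-); Gamma_0 f = c,
  Gamma_1^{\<Sigma>,C} f = c C + \<integral> f_Q d\<Sigma>.\<close>
definition Ahat :: "(real \<Rightarrow> real) \<Rightarrow> real \<Rightarrow> (real \<Rightarrow> real) \<Rightarrow> real \<Rightarrow> (vec \<times> vec) set" where
  "Ahat Sp Cp Sm Cm = {((fp, fm), (gp, gm)).
     \<exists>fQp cp fQm cm.
        Tstar_decomp (LS_measure Sp) fp fQp cp \<and> Tstar_image (LS_measure Sp) gp fQp cp \<and>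
        Tstar_decomp (LS_measure Sm) fm fQm cm \<and> Tstar_image (LS_measure Sm) gm fQm cm \<and>
        cp = cm \<and>
        cp * complex_of_real Cp + integral\<^sup>L (LS_measure Sp) fQp
          = cm * complex_of_real Cm + integral\<^sup>L (LS_measure Sm) fQm}"

definition vnull :: "real measure \<Rightarrow> real measure \<Rightarrow> vec \<Rightarrow> bool" where
  "vnull Mp Mm v \<longleftrightarrow> nullf Mp (fst v) \<and> nullf Mm (snd v)"

text \<open>rootsp A z n = ker (A - z)^n (as a set of representatives).\<close>
fun rootsp :: "real measure \<Rightarrow> real measure \<Rightarrow> (vec \<times> vec) set \<Rightarrow> complex \<Rightarrow> nat \<Rightarrow> vec set" where
  "rootsp Mp Mm A z 0 = {v. vnull Mp Mm v}"
| "rootsp Mp Mm A z (Suc n) = {v. \<exists>w. (v, w) \<in> A \<and>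
      ((\<lambda>t. fst w t - z * fst v t), (\<lambda>t. snd w t - z * snd v t)) \<in> rootsp Mp Mm A z n}"

definition indep_mod :: "real measure \<Rightarrow> real measure \<Rightarrow> vec set \<Rightarrow> bool" where
  "indep_mod Mp Mm F \<longleftrightarrow> (\<forall>a :: vec \<Rightarrow> complex.
      vnull Mp Mm ((\<lambda>t. \<Sum>v\<in>F. a v * fst v t), (\<lambda>t. \<Sum>v\<in>F. a v * snd v t))
      \<longrightarrow> (\<forall>v\<in>F. a v = 0))"

definition dim_mod :: "real measure \<Rightarrow> real measure \<Rightarrow> vec set \<Rightarrow> enat" where
  "dim_mod Mp Mm S = Sup {enat (card F) | F. finite F \<and> F \<subseteq> S \<and> indep_mod Mp Mm F}"

definition op_sigma_p :: "real measure \<Rightarrow> real measure \<Rightarrow> (vec \<times> vec) set \<Rightarrow> complex set" where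
  "op_sigma_p Mp Mm A = {z. \<exists>v \<in> rootsp Mp Mm A z 1. \<not> vnull Mp Mm v}"

definition geom_mult :: "real measure \<Rightarrow> real measure \<Rightarrow> (vec \<times> vec) set \<Rightarrow> complex \<Rightarrow> enat" where
  "geom_mult Mp Mm A z = dim_mod Mp Mm (rootsp Mp Mm A z 1)"

definition alg_mult :: "real measure \<Rightarrow> real measure \<Rightarrow> (vec \<times> vec) set \<Rightarrow> complex \<Rightarrow> enat" where
  "alg_mult Mp Mm A z = dim_mod Mp Mm (\<Union>n. rootsp Mp Mm A z n)"

definition simple_eig :: "real measure \<Rightarrow> real measure \<Rightarrow> (vec \<times> vec) set \<Rightarrow> complex \<Rightarrow> bool" where
  "simple_eig Mp Mm A z \<longleftrightarrow> z \<in> op_sigma_p Mp Mm A \<and> alg_mult Mp Mm A z = 1"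

definition is_greatest :: "enat set \<Rightarrow> enat \<Rightarrow> bool" where
  "is_greatest S k \<longleftrightarrow> k \<in> S \<and> (\<forall>k'\<in>S. k' \<le> k)"

definition admissible :: "(real \<Rightarrow> real) \<Rightarrow> real \<Rightarrow> bool" where
  "admissible S C \<longleftrightarrow> mono S
     \<and> (\<integral>\<^sup>+ t. ennreal (1 / (1 + t^2)) \<partial>LS_measure S) < \<infinity>
     \<and> emeasure (LS_measure S) UNIV = \<infinity>
     \<and> (\<forall>t. S t = (Lim (at_left t) S + Lim (at_right t) S) / 2)
     \<and> S 0 = 0
     \<and> (\<integral>\<^sup>+ t. ennreal (1 / (1 + \<bar>t\<bar>)) \<partial>LS_measure S) < \<infinity>
     \<and> C = (\<integral> t. t / (1 + t^2) \<partial>LS_measure S)"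

end

theory Submission
  imports Defs "HOL-Library.Function_Algebras"
begin


locale side =
  fixes M :: "real measure"
  assumes sets_M: "sets M = sets borel"
    and fin1: "(\<integral>\<^sup>+ t. ennreal (1 / (1 + t^2)) \<partial>M) < \<infinity>"
    and fin2: "(\<integral>\<^sup>+ t. ennreal (1 / (1 + \<bar>t\<bar>)) \<partial>M) < \<infinity>"
    and infM: "emeasure M UNIV = \<infinity>"
begin

lemma space_M[simp]: "space M = UNIV"
  using sets_eq_imp_space_eq[OF sets_M] by simp

lemma sets_M'[measurable_cong]: "sets M = sets borel" by (rule sets_M)

lemma meas_iff: "f \<in> borel_measurable M \<longleftrightarrow> f \<in> borel_measurable borel"
  by (simp only: measurable_cong_sets[OF sets_M refl])

lemma int_inv: "integrable M (\<lambda>t. 1 / (1 + t^2))"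
  by (rule integrableI_nonneg) (use fin1 in auto)

lemma int_inv2: "integrable M (\<lambda>t. 1 / (1 + \<bar>t\<bar>))"
  by (rule integrableI_nonneg) (use fin2 in auto)

lemma L2_meas: "L2 M f \<Longrightarrow> f \<in> borel_measurable M"
  by (simp add: L2_def)

lemma L2_bound:
  assumes "L2 M f" "g \<in> borel_measurable M" "AE t in M. cmod (g t) \<le> K * cmod (f t)"
  shows "L2 M g"
proof -
  have i: "integrable M (\<lambda>t. K^2 * (cmod (f t))^2)" using assms(1) by (simp add: L2_def)
  have ae: "AE t in M. norm ((cmod (g t))^2) \<le> norm (K^2 * (cmod (f t))^2)"
    using assms(3) 
  proof eventually_elim
    case (elim t)
    have "(cmod (g t))^2 \<le> (K * cmod (f t))^2"
      by (rule power_mono[OF elim norm_ge_zero])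
    then show ?case by (simp add: power_mult_distrib)
  qed
  have m: "(\<lambda>t. (cmod (g t))^2) \<in> borel_measurable M" using assms(2) by measurable
  show ?thesis using assms(2) Bochner_Integration.integrable_bound[OF i m ae] unfolding L2_def by simp
qed

lemma sq2: "(a + b)^2 \<le> 2 * a^2 + 2 * (b::real)^2"
proof -
  have "0 \<le> (a - b)^2" by simp
  then show ?thesis by (simp add: power2_eq_square algebra_simps)
qed

lemma L2_add: assumes "L2 M f" "L2 M g" shows "L2 M (\<lambda>t. f t + g t)"
proof -
  have i: "integrable M (\<lambda>t. 2 * (cmod (f t))^2 + 2 * (cmod (g t))^2)"
    using assms by (simp add: L2_def)
  have bnd: "norm ((cmod (f t + g t))^2) \<le> norm (2 * (cmod (f t))^2 + 2 * (cmod (g t))^2)" for t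
  proof -
    have "cmod (f t + g t) \<le> cmod (f t) + cmod (g t)" by (rule norm_triangle_ineq)
    then have "(cmod (f t + g t))^2 \<le> (cmod (f t) + cmod (g t))^2"
      by (rule power_mono) simp
    also have "\<dots> \<le> 2 * (cmod (f t))^2 + 2 * (cmod (g t))^2"
      using sq2[of "cmod (f t)" "cmod (g t)"] by simp
    finally show ?thesis by simp
  qed
  have ae: "AE t in M. norm ((cmod (f t + g t))^2) \<le> norm (2 * (cmod (f t))^2 + 2 * (cmod (g t))^2)"
    by (rule AE_I2) (rule bnd)
  have [measurable]: "f \<in> borel_measurable M" "g \<in> borel_measurable M" using assms unfolding L2_def by auto
  have m1: "(\<lambda>t. f t + g t) \<in> borel_measurable M" by measurable
  have m2: "(\<lambda>t. (cmod (f t + g t))^2) \<in> borel_measurable M" by measurable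
  show ?thesis unfolding L2_def
    using Bochner_Integration.integrable_bound[OF i m2 ae] m1 by simp
qed

lemma L2_scale: assumes "L2 M f" shows "L2 M (\<lambda>t. c * f t)"
proof -
  have [measurable]: "f \<in> borel_measurable M" using assms unfolding L2_def by auto
  have "(\<lambda>t. c * f t) \<in> borel_measurable M" by measurable
  then show ?thesis using assms unfolding L2_def by (simp add: norm_mult power_mult_distrib)
qed

lemma L2_uminus: assumes "L2 M f" shows "L2 M (\<lambda>t. - f t)"
  using L2_scale[OF assms, of "-1"] by simp

lemma L2_diff: assumes "L2 M f" "L2 M g" shows "L2 M (\<lambda>t. f t - g t)"
  using L2_add[OF assms(1) L2_uminus[OF assms(2)]] by simp

lemma L2_zero: "L2 M (\<lambda>t. 0)" by (simp add: L2_def)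

lemma L2_cong: assumes "L2 M f" "g \<in> borel_measurable M" "AE t in M. g t = f t" shows "L2 M g"
  by (rule L2_bound[OF assms(1,2), of 1]) (use assms(3) in auto)

lemma L2_sum: "finite S \<Longrightarrow> (\<And>i. i \<in> S \<Longrightarrow> L2 M (f i)) \<Longrightarrow> L2 M (\<lambda>t. \<Sum>i\<in>S. f i t)"
  by (induction S rule: finite_induct) (auto intro: L2_add L2_zero)

lemma L2_const: assumes "L2 M (\<lambda>t. c)" shows "c = 0"
proof (rule ccontr)
  assume "c \<noteq> 0"
  have "integrable M (\<lambda>t. (cmod c)^2)" using assms by (simp add: L2_def)
  then have "(\<integral>\<^sup>+ t. ennreal (norm ((cmod c)^2)) \<partial>M) < \<infinity>"
    by (simp only: integrable_iff_bounded)
  moreover have "(\<integral>\<^sup>+ t. ennreal (norm ((cmod c)^2)) \<partial>M) = ennreal (norm ((cmod c)^2)) * emeasure M (space M)"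
    by (rule nn_integral_const)
  moreover have "ennreal (norm ((cmod c)^2)) \<noteq> 0" using \<open>c \<noteq> 0\<close> by simp
  ultimately show False using infM by simp
qed

end


lemma alg1: "complex_of_real t * (a + c * complex_of_real (t / (t^2+1))) - c
   = complex_of_real t * a - c * complex_of_real (1/(t^2+1))"
proof -
  have pos: "t^2 + 1 \<noteq> 0" by (smt (verit) zero_le_power2)
  have "t * (t / (t^2+1)) - 1 = - (1/(t^2+1))" using pos by (simp add: field_simps power2_eq_square)
  then have "complex_of_real (t * (t / (t^2+1)) - 1) = complex_of_real (- (1/(t^2+1)))" by simp
  then have "complex_of_real t * complex_of_real (t / (t^2+1)) - 1 = - complex_of_real (1/(t^2+1))"
    by simp
  then have e: "complex_of_real t * complex_of_real (t / (t^2+1)) = 1 - complex_of_real (1/(t^2+1))"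
    by (simp add: algebra_simps)
  have "complex_of_real t * (a + c * complex_of_real (t / (t^2+1))) - c
     = complex_of_real t * a + c * (complex_of_real t * complex_of_real (t / (t^2+1))) - c"
    by (simp add: algebra_simps)
  also have "\<dots> = complex_of_real t * a - c * complex_of_real (1/(t^2+1))"
    unfolding e by (simp add: algebra_simps)
  finally show ?thesis .
qed

lemma xx: "x > 0 \<Longrightarrow> (x::real) / x^2 = 1 / x" by (simp add: power2_eq_square)

context side begin

lemma L2_ofreal: assumes "f \<in> borel_measurable M" "\<And>t. (f t)^2 \<le> 1 / (1 + t^2)"
  shows "L2 M (\<lambda>t. complex_of_real (f t))"
proof -
  have [measurable]: "f \<in> borel_measurable M" using assms(1) by simp
  have m: "(\<lambda>t. (cmod (complex_of_real (f t)))^2) \<in> borel_measurable M" by measurable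
  have ae: "AE t in M. norm ((cmod (complex_of_real (f t)))^2) \<le> norm (1 / (1 + t^2))"
    by (rule AE_I2) (use assms(2) in simp)
  have "integrable M (\<lambda>t. (cmod (complex_of_real (f t)))^2)"
    by (rule Bochner_Integration.integrable_bound[OF int_inv m ae])
  moreover have "(\<lambda>t. complex_of_real (f t)) \<in> borel_measurable M" by measurable
  ultimately show ?thesis by (simp add: L2_def)
qed

lemma L2_tq: "L2 M (\<lambda>t. complex_of_real (t / (t^2+1)))"
proof (rule L2_ofreal)
  show "(\<lambda>t. t / (t^2+1)) \<in> borel_measurable M" by measurable
  fix t :: real
  have pos: "t^2 + 1 > 0" by (smt (verit) zero_le_power2)
  have "(t / (t^2+1))^2 = t^2 / (t^2+1)^2" by (simp add: power_divide)
  also have "\<dots> \<le> (t^2+1) / (t^2+1)^2" by (rule divide_right_mono) auto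
  also have "\<dots> = 1 / (1 + t^2)" using xx[of "t^2+1"] pos by (simp add: add.commute)
  finally show "(t / (t^2+1))^2 \<le> 1 / (1 + t^2)" .
qed

lemma L2_q: "L2 M (\<lambda>t. complex_of_real (1 / (t^2+1)))"
proof (rule L2_ofreal)
  show "(\<lambda>t. 1 / (t^2+1)) \<in> borel_measurable M" by measurable
  fix t :: real
  have pos: "t^2 + 1 \<ge> 1" by (smt (verit) zero_le_power2)
  have "(1 / (t^2+1))^2 = 1 / (t^2+1) * (1 / (t^2+1))" by (simp add: power2_eq_square)
  also have "\<dots> \<le> 1 / (t^2+1) * 1"
  proof (rule mult_left_mono)
    have p: "0 < t^2+1" using pos by linarith
    show "1 / (t^2+1) \<le> 1" using p pos divide_le_eq_1[of 1 "t^2+1"] by blast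
    show "0 \<le> 1 / (t^2+1)" using pos by simp
  qed
  finally show "(1 / (t^2+1))^2 \<le> 1 / (1 + t^2)" by (simp add: add.commute)
qed

lemma int_tq: "integrable M (\<lambda>t. t / (1 + t^2))"
proof -
  have m: "(\<lambda>t. t / (1 + t^2)) \<in> borel_measurable M" by measurable
  have i: "integrable M (\<lambda>t. 2 * (1 / (1 + \<bar>t\<bar>)))" by (rule integrable_mult_right[OF int_inv2])
  have "norm (t / (1 + t^2)) \<le> norm (2 * (1 / (1 + \<bar>t\<bar>)))" for t :: real
  proof -
    have pos: "1 + t^2 > 0" by (smt (verit) zero_le_power2)
    have "0 \<le> (\<bar>t\<bar> - 1)^2" by simp
    then have "\<bar>t\<bar> * (1 + \<bar>t\<bar>) \<le> 2 * (1 + \<bar>t\<bar>^2)"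
      by (simp add: power2_eq_square algebra_simps)
    then have "\<bar>t\<bar> * (1 + \<bar>t\<bar>) \<le> 2 * (1 + t^2)" by simp
    then show ?thesis using pos by (simp add: abs_div divide_le_eq field_simps)
  qed
  then show ?thesis by (intro Bochner_Integration.integrable_bound[OF i m] AE_I2)
qed

lemma N1:
  assumes f: "L2 M f" and g: "L2 M (\<lambda>t. complex_of_real t * f t - c)"
  shows "integrable M f"
proof -
  define h where "h t = (cmod (f t))^2 / 2 + (cmod (complex_of_real t * f t - c))^2 / 2
      + 1 / (1 + t^2) + cmod c * (1 / (1 + \<bar>t\<bar>))" for t
  have i: "integrable M h" unfolding h_def using f g int_inv int_inv2
    by (intro Bochner_Integration.integrable_add integrable_divide integrable_mult_right)
       (auto simp: L2_def)
  have [measurable]: "f \<in> borel_measurable M" using f by (simp add: L2_def)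
  have m: "f \<in> borel_measurable M" by simp
  have "norm (f t) \<le> norm (h t)" for t
  proof -
    define a where "a = cmod (f t)"
    define b where "b = cmod (complex_of_real t * f t - c)"
    define u where "u = 1 / (1 + \<bar>t\<bar>)"
    have u0: "u > 0" "u \<le> 1" unfolding u_def by auto
    have "\<bar>t\<bar> * a \<le> b + cmod c" unfolding a_def b_def
      using norm_triangle_ineq[of "complex_of_real t * f t - c" c] by (simp add: norm_mult)
    then have "(1 + \<bar>t\<bar>) * a \<le> a + b + cmod c" by (simp add: algebra_simps)
    then have 1: "a \<le> (a + b + cmod c) * u" unfolding u_def
      by (simp add: field_simps)
    have "u^2 \<le> 1 / (1 + t^2)" unfolding u_def
    proof -
      have "1 + t^2 \<le> (1 + \<bar>t\<bar>)^2" by (simp add: power2_eq_square algebra_simps)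
      then have "1 / (1 + \<bar>t\<bar>)^2 \<le> 1 / (1 + t^2)"
        by (intro divide_left_mono) (auto simp: add_pos_nonneg)
      then show "(1 / (1 + \<bar>t\<bar>))^2 \<le> 1 / (1 + t^2)" by (simp add: power_divide)
    qed
    moreover have "a * u \<le> a^2/2 + u^2/2"
    proof -
      have "0 \<le> (a - u)^2" by simp
      then show ?thesis by (simp add: power2_eq_square algebra_simps)
    qed
    moreover have "b * u \<le> b^2/2 + u^2/2"
    proof -
      have "0 \<le> (b - u)^2" by simp
      then show ?thesis by (simp add: power2_eq_square algebra_simps)
    qed
    ultimately have "a \<le> a^2/2 + b^2/2 + 1/(1+t^2) + cmod c * u"
      using 1 by (simp add: algebra_simps)
    then show ?thesis unfolding h_def a_def b_def u_def by simp
  qed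
  then show ?thesis by (intro Bochner_Integration.integrable_bound[OF i m] AE_I2)
qed

lemma atom_fin: "emeasure M {r} < \<infinity>"
proof -
  have "(\<integral>\<^sup>+ t. ennreal (1 / (1 + r^2)) * indicator {r} t \<partial>M) \<le> (\<integral>\<^sup>+ t. ennreal (1 / (1 + t^2)) \<partial>M)"
    by (intro nn_integral_mono) (auto split: split_indicator)
  moreover have "(\<integral>\<^sup>+ t. ennreal (1 / (1 + r^2)) * indicator {r} t \<partial>M) = ennreal (1 / (1 + r^2)) * emeasure M {r}"
    by (rule nn_integral_cmult_indicator) (simp add: sets_M)
  ultimately have "ennreal (1 / (1 + r^2)) * emeasure M {r} < \<infinity>" using fin1 by simp
  moreover have "1 / (1 + r^2) > 0" by (smt (verit) divide_pos_pos zero_le_power2)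
  ultimately have "emeasure M {r} = 0 \<or> emeasure M {r} < top" by (simp add: ennreal_mult_less_top)
  then show ?thesis by (elim disjE) (simp_all add: ennreal_zero_less_top)
qed

lemma AE_atom: assumes "emeasure M {r} \<noteq> 0" "AE t in M. P t" shows "P r"
proof (rule ccontr)
  assume "\<not> P r"
  from assms(2) obtain N where N: "{x \<in> space M. \<not> P x} \<subseteq> N" "emeasure M N = 0" "N \<in> sets M"
    by (rule AE_E)
  then have "{r} \<subseteq> N" using \<open>\<not> P r\<close> by auto
  then have "emeasure M {r} \<le> emeasure M N" by (intro emeasure_mono N(3))
  with N(2) assms(1) show False by simp
qed

end


definition rel :: "real measure \<Rightarrow> (real\<Rightarrow>complex) \<Rightarrow> (real\<Rightarrow>complex) \<Rightarrow> complex \<Rightarrow> bool" where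
  "rel M f g c \<longleftrightarrow> L2 M f \<and> L2 M g \<and> (AE t in M. g t = complex_of_real t * f t - c)"

context side begin

lemma ecomm: "(t::real)^2 + 1 = 1 + t^2" by simp

lemma int_tq2: "integrable M (\<lambda>t. complex_of_real (t / (t^2 + 1)))"
  using integrable_of_real[OF int_tq] by (simp only: ecomm)

lemma side_fwd:
  assumes d: "Tstar_decomp M f fQ c" and i: "Tstar_image M g fQ c"
  shows "rel M f g c \<and> c * complex_of_real (\<integral> t. t / (1 + t^2) \<partial>M) + integral\<^sup>L M fQ = integral\<^sup>L M f"
proof -
  from d have f: "L2 M f" and fQ: "L2 M fQ" and tfQ: "L2 M (\<lambda>t. complex_of_real t * fQ t)"
    and ae1: "AE t in M. f t = fQ t + c * complex_of_real (t / (t^2 + 1))"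
    by (auto simp: Tstar_decomp_def domQ_def)
  from i have g: "L2 M g" and ae2: "AE t in M. g t = complex_of_real t * fQ t - c * complex_of_real (1 / (t^2 + 1))"
    by (auto simp: Tstar_image_def)
  have ae: "AE t in M. g t = complex_of_real t * f t - c"
    using ae1 ae2 by eventually_elim (simp only: alg1)
  have intQ: "integrable M fQ" using N1[OF fQ, of 0] tfQ by simp
  have [measurable]: "f \<in> borel_measurable M" "fQ \<in> borel_measurable M" using f fQ by (auto simp: L2_def)
  have "integral\<^sup>L M f = (\<integral> t. fQ t + c * complex_of_real (t / (t^2 + 1)) \<partial>M)"
    by (rule integral_cong_AE) (use ae1 in auto)
  also have "\<dots> = integral\<^sup>L M fQ + (\<integral> t. c * complex_of_real (t / (t^2 + 1)) \<partial>M)"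
    by (rule Bochner_Integration.integral_add[OF intQ integrable_mult_right[OF int_tq2]])
  also have "(\<integral> t. c * complex_of_real (t / (t^2 + 1)) \<partial>M) = c * (\<integral> t. complex_of_real (t / (t^2 + 1)) \<partial>M)"
    by (rule integral_mult_right_zero)
  also have "(\<integral> t. complex_of_real (t / (t^2 + 1)) \<partial>M) = complex_of_real (\<integral> t. t / (1 + t^2) \<partial>M)"
    by (simp only: ecomm integral_complex_of_real)
  finally show ?thesis using f g ae by (simp add: rel_def)
qed

lemma side_bwd:
  assumes r: "rel M f g c"
  shows "Tstar_decomp M f (\<lambda>t. f t - c * complex_of_real (t / (t^2 + 1))) c
       \<and> Tstar_image M g (\<lambda>t. f t - c * complex_of_real (t / (t^2 + 1))) c"
proof -
  from r have f: "L2 M f" and g: "L2 M g" and ae: "AE t in M. g t = complex_of_real t * f t - c"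
    by (auto simp: rel_def)
  have [measurable]: "f \<in> borel_measurable M" "g \<in> borel_measurable M" using f g by (auto simp: L2_def)
  have fQ: "L2 M (\<lambda>t. f t - c * complex_of_real (t / (t^2 + 1)))"
    by (intro L2_diff f L2_scale L2_tq)
  have ae': "AE t in M. complex_of_real t * (f t - c * complex_of_real (t / (t^2 + 1)))
      = g t + c * complex_of_real (1 / (t^2 + 1))"
    using ae
  proof eventually_elim
    case (elim t)
    have "complex_of_real t * ((f t - c * complex_of_real (t / (t^2 + 1))) + c * complex_of_real (t / (t^2 + 1))) - c
       = complex_of_real t * (f t - c * complex_of_real (t / (t^2 + 1))) - c * complex_of_real (1 / (t^2 + 1))"
      by (rule alg1)
    then show ?case using elim by (simp add: algebra_simps)
  qed
  have tfQ: "L2 M (\<lambda>t. complex_of_real t * (f t - c * complex_of_real (t / (t^2 + 1))))"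
    by (rule L2_cong[OF L2_add[OF g L2_scale[OF L2_q]] _ ae']) measurable
  have ae2: "AE t in M. g t = complex_of_real t * (f t - c * complex_of_real (t / (t^2 + 1)))
      - c * complex_of_real (1 / (t^2 + 1))"
    using ae' by eventually_elim simp
  show ?thesis using f fQ tfQ g ae2
    by (auto simp: Tstar_decomp_def Tstar_image_def domQ_def)
qed

end

lemma Ahat_char:
  assumes sp: "side (LS_measure Sp)" and sm: "side (LS_measure Sm)"
    and cp: "Cp = (\<integral> t. t / (1 + t^2) \<partial>LS_measure Sp)"
    and cm: "Cm = (\<integral> t. t / (1 + t^2) \<partial>LS_measure Sm)"
  shows "((fp, fm), (gp, gm)) \<in> Ahat Sp Cp Sm Cm \<longleftrightarrow>
    (\<exists>c. rel (LS_measure Sp) fp gp c \<and> rel (LS_measure Sm) fm gm c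
       \<and> integral\<^sup>L (LS_measure Sp) fp = integral\<^sup>L (LS_measure Sm) fm)"
proof
  assume "((fp, fm), (gp, gm)) \<in> Ahat Sp Cp Sm Cm"
  then obtain fQp cp' fQm cm' where
    h: "Tstar_decomp (LS_measure Sp) fp fQp cp'" "Tstar_image (LS_measure Sp) gp fQp cp'"
      "Tstar_decomp (LS_measure Sm) fm fQm cm'" "Tstar_image (LS_measure Sm) gm fQm cm'"
      "cp' = cm'" "cp' * complex_of_real Cp + integral\<^sup>L (LS_measure Sp) fQp
          = cm' * complex_of_real Cm + integral\<^sup>L (LS_measure Sm) fQm"
    unfolding Ahat_def by blast
  from side.side_fwd[OF sp h(1,2)] side.side_fwd[OF sm h(3,4)] h(5,6) cp cm
  show "\<exists>c. rel (LS_measure Sp) fp gp c \<and> rel (LS_measure Sm) fm gm c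
       \<and> integral\<^sup>L (LS_measure Sp) fp = integral\<^sup>L (LS_measure Sm) fm" by metis
next
  assume "\<exists>c. rel (LS_measure Sp) fp gp c \<and> rel (LS_measure Sm) fm gm c
       \<and> integral\<^sup>L (LS_measure Sp) fp = integral\<^sup>L (LS_measure Sm) fm"
  then obtain c where r: "rel (LS_measure Sp) fp gp c" "rel (LS_measure Sm) fm gm c"
    "integral\<^sup>L (LS_measure Sp) fp = integral\<^sup>L (LS_measure Sm) fm" by blast
  define fQp where "fQp = (\<lambda>t. fp t - c * complex_of_real (t / (t^2 + 1)))"
  define fQm where "fQm = (\<lambda>t. fm t - c * complex_of_real (t / (t^2 + 1)))"
  note bp = side.side_bwd[OF sp r(1), folded fQp_def]
  note bm = side.side_bwd[OF sm r(2), folded fQm_def]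
  note fp = side.side_fwd[OF sp conjunct1[OF bp] conjunct2[OF bp]]
  note fm = side.side_fwd[OF sm conjunct1[OF bm] conjunct2[OF bm]]
  have "c * complex_of_real Cp + integral\<^sup>L (LS_measure Sp) fQp
          = c * complex_of_real Cm + integral\<^sup>L (LS_measure Sm) fQm"
    using fp fm r(3) cp cm by simp
  then show "((fp, fm), (gp, gm)) \<in> Ahat Sp Cp Sm Cm"
    unfolding Ahat_def using bp bm by blast
qed


definition sok :: "real measure \<Rightarrow> complex \<Rightarrow> (real\<Rightarrow>complex) \<Rightarrow> (real\<Rightarrow>complex) \<Rightarrow> complex \<Rightarrow> bool" where
  "sok M z f g c \<longleftrightarrow> L2 M f \<and> L2 M (\<lambda>t. complex_of_real t * f t - c)
     \<and> (AE t in M. (complex_of_real t - z) * f t - c = g t)"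

definition vsub :: "vec \<Rightarrow> vec \<Rightarrow> vec" where
  "vsub v w = ((\<lambda>t. fst v t - fst w t), (\<lambda>t. snd v t - snd w t))"

definition vcomb :: "'i set \<Rightarrow> ('i \<Rightarrow> complex) \<Rightarrow> ('i \<Rightarrow> vec) \<Rightarrow> vec" where
  "vcomb I a e = ((\<lambda>t. \<Sum>i\<in>I. a i * fst (e i) t), (\<lambda>t. \<Sum>i\<in>I. a i * snd (e i) t))"

definition vzero :: vec where "vzero = ((\<lambda>t. 0), (\<lambda>t. 0))"

definition meas :: "vec \<Rightarrow> bool" where
  "meas v \<longleftrightarrow> fst v \<in> borel_measurable borel \<and> snd v \<in> borel_measurable borel"

definition vlin :: "complex \<Rightarrow> vec \<Rightarrow> complex \<Rightarrow> vec \<Rightarrow> vec" where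
  "vlin a v b w = ((\<lambda>t. a * fst v t + b * fst w t), (\<lambda>t. a * snd v t + b * snd w t))"

context side begin

lemma sok_int: "sok M z f g c \<Longrightarrow> integrable M f"
  unfolding sok_def using N1 by blast

lemma sok_cong_f:
  assumes "sok M z f g c" "AE t in M. f t = f' t" "f' \<in> borel_measurable M"
  shows "sok M z f' g c"
proof -
  have [measurable]: "f' \<in> borel_measurable M" by (fact assms(3))
  from assms(1) have f: "L2 M f" and tf: "L2 M (\<lambda>t. complex_of_real t * f t - c)"
    and ae: "AE t in M. (complex_of_real t - z) * f t - c = g t" by (auto simp: sok_def)
  have "L2 M f'" by (rule L2_cong[OF f assms(3)]) (use assms(2) in \<open>auto elim: eventually_mono\<close>)
  moreover have "L2 M (\<lambda>t. complex_of_real t * f' t - c)"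
    by (rule L2_cong[OF tf]) (measurable, use assms(2) in \<open>auto elim: eventually_mono\<close>)
  moreover have "AE t in M. (complex_of_real t - z) * f' t - c = g t"
    using ae assms(2) by eventually_elim simp
  ultimately show ?thesis by (simp add: sok_def)
qed

lemma sok_null:
  assumes "sok M z f g c" "AE t in M. f t = 0"
  shows "c = 0 \<and> (AE t in M. g t = 0)"
proof -
  from assms(1) have tf: "L2 M (\<lambda>t. complex_of_real t * f t - c)"
    and ae: "AE t in M. (complex_of_real t - z) * f t - c = g t" by (auto simp: sok_def)
  have "L2 M (\<lambda>t. - c)"
    by (rule L2_cong[OF tf]) (simp, use assms(2) in \<open>auto elim: eventually_mono\<close>)
  then have c: "c = 0" using L2_const by fastforce
  have "AE t in M. g t = 0" using ae assms(2) by eventually_elim (simp add: c)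
  with c show ?thesis by simp
qed

lemma sok_lin:
  assumes s1: "sok M z f1 g1 c1" and s2: "sok M z f2 g2 c2"
  shows "sok M z (\<lambda>t. a * f1 t + b * f2 t) (\<lambda>t. a * g1 t + b * g2 t) (a * c1 + b * c2)"
proof -
  from s1 have f1: "L2 M f1" and tf1: "L2 M (\<lambda>t. complex_of_real t * f1 t - c1)"
    and ae1: "AE t in M. (complex_of_real t - z) * f1 t - c1 = g1 t" by (auto simp: sok_def)
  from s2 have f2: "L2 M f2" and tf2: "L2 M (\<lambda>t. complex_of_real t * f2 t - c2)"
    and ae2: "AE t in M. (complex_of_real t - z) * f2 t - c2 = g2 t" by (auto simp: sok_def)
  have "L2 M (\<lambda>t. a * f1 t + b * f2 t)" by (intro L2_add L2_scale f1 f2)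
  moreover have "L2 M (\<lambda>t. complex_of_real t * (a * f1 t + b * f2 t) - (a * c1 + b * c2))"
  proof -
    have "L2 M (\<lambda>t. a * (complex_of_real t * f1 t - c1) + b * (complex_of_real t * f2 t - c2))"
      by (intro L2_add L2_scale tf1 tf2)
    moreover have "(\<lambda>t. a * (complex_of_real t * f1 t - c1) + b * (complex_of_real t * f2 t - c2))
      = (\<lambda>t. complex_of_real t * (a * f1 t + b * f2 t) - (a * c1 + b * c2))"
      by (rule ext) (simp add: algebra_simps)
    ultimately show ?thesis by simp
  qed
  moreover have "AE t in M. (complex_of_real t - z) * (a * f1 t + b * f2 t) - (a * c1 + b * c2) = a * g1 t + b * g2 t"
    using ae1 ae2 by eventually_elim (simp add: algebra_simps)
  ultimately show ?thesis by (simp add: sok_def)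
qed

end

locale two = P: side Mp + N: side Mm for Mp Mm +
  fixes A :: "(vec \<times> vec) set"
  assumes A_char: "\<And>fp fm gp gm. ((fp, fm), (gp, gm)) \<in> A \<longleftrightarrow>
    (\<exists>c. rel Mp fp gp c \<and> rel Mm fm gm c \<and> integral\<^sup>L Mp fp = integral\<^sup>L Mm fm)"
begin

abbreviation "vn \<equiv> vnull Mp Mm"
abbreviation "veq v w \<equiv> vn (vsub v w)"
abbreviation "R \<equiv> rootsp Mp Mm A"

definition Dc :: "complex \<Rightarrow> vec \<Rightarrow> vec \<Rightarrow> bool" where
  "Dc z u v \<longleftrightarrow> (\<exists>c. sok Mp z (fst v) (fst u) c \<and> sok Mm z (snd v) (snd u) c
      \<and> integral\<^sup>L Mp (fst v) = integral\<^sup>L Mm (snd v))"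

lemma A_char': "(v, w) \<in> A \<longleftrightarrow>
    (\<exists>c. rel Mp (fst v) (fst w) c \<and> rel Mm (snd v) (snd w) c \<and> integral\<^sup>L Mp (fst v) = integral\<^sup>L Mm (snd v))"
  using A_char[of "fst v" "snd v" "fst w" "snd w"] by simp

lemma veq_refl: "veq v v" by (simp add: vnull_def vsub_def nullf_def)

lemma veq_sym: "veq v w \<Longrightarrow> veq w v"
  by (auto simp: vnull_def vsub_def nullf_def elim: eventually_mono)

lemma veq_trans: assumes "veq u v" "veq v w" shows "veq u w"
proof -
  have 1: "AE t in Mp. fst u t - fst v t = 0" "AE t in Mp. fst v t - fst w t = 0"
    "AE t in Mm. snd u t - snd v t = 0" "AE t in Mm. snd v t - snd w t = 0"
    using assms by (auto simp: vnull_def vsub_def nullf_def)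
  have "AE t in Mp. fst u t - fst w t = 0" using 1(1,2) by eventually_elim simp
  moreover have "AE t in Mm. snd u t - snd w t = 0" using 1(3,4) by eventually_elim simp
  ultimately show ?thesis by (simp add: vnull_def vsub_def nullf_def)
qed

lemma vn_veq: "vn v \<longleftrightarrow> veq v vzero" by (simp add: vsub_def vzero_def)

lemma Dc_meas: "Dc z u v \<Longrightarrow> meas v"
  by (auto simp: Dc_def sok_def meas_def L2_def P.meas_iff N.meas_iff)

lemma sok_cong_u: "sok M z f g c \<Longrightarrow> AE t in M. g t = g' t \<Longrightarrow> sok M z f g' c"
  unfolding sok_def by (auto elim: eventually_rev_mp)

lemma Dc_cong_v:
  assumes "Dc z u v" "veq v v'" "meas v'"
  shows "Dc z u v'"
proof -
  obtain c where c: "sok Mp z (fst v) (fst u) c" "sok Mm z (snd v) (snd u) c"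
    "integral\<^sup>L Mp (fst v) = integral\<^sup>L Mm (snd v)" using assms(1) by (auto simp: Dc_def)
  have ae: "AE t in Mp. fst v t = fst v' t" "AE t in Mm. snd v t = snd v' t"
    using assms(2) by (auto simp: vnull_def nullf_def vsub_def elim: eventually_mono)
  have m: "fst v' \<in> borel_measurable Mp" "snd v' \<in> borel_measurable Mm"
    using assms(3) by (auto simp: meas_def P.meas_iff N.meas_iff)
  have mv: "fst v \<in> borel_measurable Mp" "snd v \<in> borel_measurable Mm"
    using c by (auto simp: sok_def L2_def)
  have "integral\<^sup>L Mp (fst v') = integral\<^sup>L Mp (fst v)"
    by (rule integral_cong_AE[OF m(1) mv(1)]) (use ae(1) in \<open>auto elim: eventually_mono\<close>)
  moreover have "integral\<^sup>L Mm (snd v') = integral\<^sup>L Mm (snd v)"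
    by (rule integral_cong_AE[OF m(2) mv(2)]) (use ae(2) in \<open>auto elim: eventually_mono\<close>)
  ultimately show ?thesis unfolding Dc_def
    using P.sok_cong_f[OF c(1) ae(1) m(1)] N.sok_cong_f[OF c(2) ae(2) m(2)] c(3) by metis
qed

lemma Dc_null: assumes "Dc z u v" "vn v" shows "vn u"
proof -
  obtain c where c: "sok Mp z (fst v) (fst u) c" "sok Mm z (snd v) (snd u) c"
    using assms(1) by (auto simp: Dc_def)
  from assms(2) have "AE t in Mp. fst v t = 0" "AE t in Mm. snd v t = 0"
    by (auto simp: vnull_def nullf_def)
  from P.sok_null[OF c(1) this(1)] N.sok_null[OF c(2) this(2)] show ?thesis
    by (simp add: vnull_def nullf_def)
qed

lemma Dc_lin: assumes "Dc z u1 v1" "Dc z u2 v2" shows "Dc z (vlin a u1 b u2) (vlin a v1 b v2)"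
proof -
  obtain c1 where c1: "sok Mp z (fst v1) (fst u1) c1" "sok Mm z (snd v1) (snd u1) c1"
    "integral\<^sup>L Mp (fst v1) = integral\<^sup>L Mm (snd v1)" using assms(1) by (auto simp: Dc_def)
  obtain c2 where c2: "sok Mp z (fst v2) (fst u2) c2" "sok Mm z (snd v2) (snd u2) c2"
    "integral\<^sup>L Mp (fst v2) = integral\<^sup>L Mm (snd v2)" using assms(2) by (auto simp: Dc_def)
  have i: "integrable Mp (fst v1)" "integrable Mp (fst v2)" "integrable Mm (snd v1)" "integrable Mm (snd v2)"
    using c1 c2 P.sok_int N.sok_int by blast+
  have "integral\<^sup>L Mp (\<lambda>t. a * fst v1 t + b * fst v2 t) = a * integral\<^sup>L Mp (fst v1) + b * integral\<^sup>L Mp (fst v2)"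
    using i by simp
  moreover have "integral\<^sup>L Mm (\<lambda>t. a * snd v1 t + b * snd v2 t) = a * integral\<^sup>L Mm (snd v1) + b * integral\<^sup>L Mm (snd v2)"
    using i by simp
  ultimately show ?thesis unfolding Dc_def vlin_def
    using P.sok_lin[OF c1(1) c2(1), of a b] N.sok_lin[OF c1(2) c2(2), of a b] c1(3) c2(3)
    by (intro exI[of _ "a * c1 + b * c2"]) simp
qed

lemma Dc_zero: "Dc z vzero vzero"
  unfolding Dc_def vzero_def sok_def by (intro exI[of _ 0]) (simp add: P.L2_zero N.L2_zero)

lemma Dc_comb: "finite I \<Longrightarrow> (\<And>i. i \<in> I \<Longrightarrow> Dc z (u i) (v i)) \<Longrightarrow> Dc z (vcomb I a u) (vcomb I a v)"
proof (induction I rule: finite_induct)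
  case empty
  then show ?case using Dc_zero by (simp add: vcomb_def vzero_def)
next
  case (insert i I)
  have "Dc z (vlin 1 (vcomb I a u) (a i) (u i)) (vlin 1 (vcomb I a v) (a i) (v i))"
    using insert by (intro Dc_lin) auto
  moreover have "vlin 1 (vcomb I a u) (a i) (u i) = vcomb (insert i I) a u"
    "vlin 1 (vcomb I a v) (a i) (v i) = vcomb (insert i I) a v"
    using insert(1,2) by (auto simp: vlin_def vcomb_def add.commute)
  ultimately show ?case by simp
qed

lemma Dc_cong_u: "Dc z u v \<Longrightarrow> veq u u' \<Longrightarrow> Dc z u' v"
  unfolding Dc_def vnull_def nullf_def vsub_def
  by (auto intro: sok_cong_u elim!: eventually_mono)

end


context two begin

lemma Rs_fwd: assumes "v \<in> R z (Suc n)" shows "\<exists>u \<in> R z n. Dc z u v"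
proof -
  from assms obtain w where w: "(v, w) \<in> A"
    and u: "((\<lambda>t. fst w t - z * fst v t), (\<lambda>t. snd w t - z * snd v t)) \<in> R z n" by auto
  from w obtain c where r: "rel Mp (fst v) (fst w) c" "rel Mm (snd v) (snd w) c"
    and ie: "integral\<^sup>L Mp (fst v) = integral\<^sup>L Mm (snd v)" by (auto simp: A_char')
  have s: "sok M z f (\<lambda>t. g t - z * f t) c" if "rel M f g c" "side M" for M f g
  proof -
    interpret side M by fact
    from that(1) have f: "L2 M f" and g: "L2 M g" and ae: "AE t in M. g t = complex_of_real t * f t - c"
      by (auto simp: rel_def)
    have [measurable]: "f \<in> borel_measurable M" using f by (simp add: L2_def)
    have "L2 M (\<lambda>t. complex_of_real t * f t - c)"
      by (rule L2_cong[OF g]) (measurable, use ae in \<open>auto elim: eventually_mono\<close>)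
    moreover have "AE t in M. (complex_of_real t - z) * f t - c = g t - z * f t"
      using ae by eventually_elim (simp add: algebra_simps)
    ultimately show ?thesis using f by (simp add: sok_def)
  qed
  have "Dc z ((\<lambda>t. fst w t - z * fst v t), (\<lambda>t. snd w t - z * snd v t)) v"
    unfolding Dc_def using s[OF r(1) P.side_axioms] s[OF r(2) N.side_axioms] ie by auto
  with u show ?thesis by blast
qed

lemma Rs_bwd:
  assumes cl: "\<And>x x'. x \<in> R z n \<Longrightarrow> veq x x' \<Longrightarrow> meas x' \<Longrightarrow> x' \<in> R z n"
    and u: "u \<in> R z n" and d: "Dc z u v"
  shows "v \<in> R z (Suc n)"
proof -
  from d obtain c where c: "sok Mp z (fst v) (fst u) c" "sok Mm z (snd v) (snd u) c"
    "integral\<^sup>L Mp (fst v) = integral\<^sup>L Mm (snd v)" by (auto simp: Dc_def)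
  define w :: vec where "w = ((\<lambda>t. complex_of_real t * fst v t - c), (\<lambda>t. complex_of_real t * snd v t - c))"
  have "(v, w) \<in> A" unfolding A_char' w_def rel_def using c by (auto simp: sok_def)
  moreover have "((\<lambda>t. fst w t - z * fst v t), (\<lambda>t. snd w t - z * snd v t)) \<in> R z n"
  proof (rule cl[OF u])
    have ae: "AE t in Mp. (complex_of_real t - z) * fst v t - c = fst u t"
      "AE t in Mm. (complex_of_real t - z) * snd v t - c = snd u t" using c by (auto simp: sok_def)
    have "AE t in Mp. fst u t - (fst w t - z * fst v t) = 0" using ae(1)
      by eventually_elim (simp add: w_def algebra_simps)
    moreover have "AE t in Mm. snd u t - (snd w t - z * snd v t) = 0" using ae(2)
      by eventually_elim (simp add: w_def algebra_simps)
    ultimately show "veq u ((\<lambda>t. fst w t - z * fst v t), (\<lambda>t. snd w t - z * snd v t))"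
      by (simp add: vnull_def nullf_def vsub_def)
    have [measurable]: "fst v \<in> borel_measurable borel" "snd v \<in> borel_measurable borel"
      using Dc_meas[OF d] by (auto simp: meas_def)
    show "meas ((\<lambda>t. fst w t - z * fst v t), (\<lambda>t. snd w t - z * snd v t))"
      unfolding meas_def w_def by simp
  qed
  ultimately show ?thesis
    unfolding rootsp.simps mem_Collect_eq by (intro exI[of _ w] conjI)
qed

lemma R_closed: "x \<in> R z n \<Longrightarrow> veq x x' \<Longrightarrow> meas x' \<Longrightarrow> x' \<in> R z n"
proof (induction n arbitrary: x x')
  case 0
  have "veq x vzero" using 0(1) vn_veq by simp
  then have "veq x' vzero" using veq_trans[OF veq_sym[OF 0(2)]] by blast
  then show ?case using vn_veq by simp
next
  case (Suc n)
  from Rs_fwd[OF Suc.prems(1)] obtain u where u: "u \<in> R z n" "Dc z u x" by blast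
  have "Dc z u x'" by (rule Dc_cong_v[OF u(2) Suc.prems(2,3)])
  show ?case by (rule Rs_bwd[OF _ u(1) \<open>Dc z u x'\<close>]) (rule Suc.IH)
qed

lemma R_Suc: "v \<in> R z (Suc n) \<longleftrightarrow> (\<exists>u \<in> R z n. Dc z u v)"
proof
  show "v \<in> R z (Suc n) \<Longrightarrow> \<exists>u \<in> R z n. Dc z u v" by (rule Rs_fwd)
  show "\<exists>u \<in> R z n. Dc z u v \<Longrightarrow> v \<in> R z (Suc n)"
  proof -
    assume "\<exists>u \<in> R z n. Dc z u v"
    then obtain u where "u \<in> R z n" "Dc z u v" by blast
    then show ?thesis by (intro Rs_bwd) (auto intro: R_closed)
  qed
qed

lemma R_0: "v \<in> R z 0 \<longleftrightarrow> vn v" by simp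

lemma R_1: "v \<in> R z 1 \<longleftrightarrow> Dc z vzero v"
proof -
  have "(\<exists>u \<in> R z 0. Dc z u v) \<longleftrightarrow> Dc z vzero v"
  proof
    assume "\<exists>u \<in> R z 0. Dc z u v"
    then obtain u where "vn u" "Dc z u v" by auto
    then show "Dc z vzero v" using Dc_cong_u vn_veq by blast
  next
    assume "Dc z vzero v"
    moreover have "vzero \<in> R z 0" by (simp add: vzero_def vnull_def nullf_def)
    ultimately show "\<exists>u \<in> R z 0. Dc z u v" by blast
  qed
  then show ?thesis using R_Suc[of v z 0] by simp
qed

end


definition cs :: "complex \<Rightarrow> (nat \<Rightarrow> complex) \<Rightarrow> (nat \<Rightarrow> complex)" where
  "cs c f = (\<lambda>i. c * f i)"

interpretation CV: Vector_Spaces.vector_space cs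
  by unfold_locales (auto simp: cs_def fun_eq_iff algebra_simps)

lemma sum_fun_apply: "(\<Sum>x\<in>t. (g x :: nat \<Rightarrow> complex)) j = (\<Sum>x\<in>t. g x j)"
  by (induction t rule: infinite_finite_induct) auto

lemma coef_bound:
  fixes G :: "(nat \<Rightarrow> complex) set"
  assumes fin: "finite G" and supp: "\<And>x j. x \<in> G \<Longrightarrow> j \<notin> {1..k} \<Longrightarrow> x j = 0"
    and ind: "\<And>t u. finite t \<Longrightarrow> t \<subseteq> G \<Longrightarrow> (\<And>j. (\<Sum>x\<in>t. u x * x j) = 0) \<Longrightarrow> (\<forall>x\<in>t. u x = 0)"
  shows "card G \<le> k"
proof -
  define d where "d j = (\<lambda>i. if i = j then (1::complex) else 0)" for j :: nat
  define U where "U = d ` {1..k}"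
  have "inj_on d {1..k}" by (auto simp: inj_on_def d_def fun_eq_iff)
  then have cU: "card U = k" unfolding U_def by (simp add: card_image)
  have "CV.independent G"
  proof
    assume "CV.dependent G"
    then obtain t u where t: "finite t" "t \<subseteq> G" "(\<Sum>v\<in>t. cs (u v) v) = 0" "\<exists>v\<in>t. u v \<noteq> 0"
      unfolding CV.dependent_explicit by blast
    have "(\<Sum>x\<in>t. u x * x j) = 0" for j
      using arg_cong[OF t(3), of "\<lambda>f. f j"] by (simp add: sum_fun_apply cs_def)
    with ind[OF t(1,2)] t(4) show False by blast
  qed
  moreover have "G \<subseteq> CV.span U"
  proof
    fix x assume x: "x \<in> G"
    have "x = (\<Sum>j\<in>{1..k}. cs (x j) (d j))"
    proof (rule ext)
      fix i
      have "(\<Sum>j\<in>{1..k}. cs (x j) (d j)) i = (\<Sum>j\<in>{1..k}. x j * d j i)"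
        by (simp only: sum_fun_apply cs_def)
      also have "\<dots> = (\<Sum>j\<in>{1..k}. if j = i then x i else 0)"
        by (rule sum.cong) (auto simp: d_def)
      also have "\<dots> = (if i \<in> {1..k} then x i else 0)" by (rule sum.delta) simp
      also have "\<dots> = x i" using supp[OF x, of i] by auto
      finally show "x i = (\<Sum>j\<in>{1..k}. cs (x j) (d j)) i" by simp
    qed
    also have "\<dots> \<in> CV.span U"
      by (intro CV.span_sum CV.span_scale CV.span_base) (auto simp: U_def)
    finally show "x \<in> CV.span U" .
  qed
  ultimately have "card G \<le> card U"
    using CV.independent_span_bound[of U G] by (auto simp: U_def)
  with cU show ?thesis by simp
qed


lemma vcomb_fst: "fst (vcomb I a e) t = (\<Sum>i\<in>I. a i * fst (e i) t)" by (simp add: vcomb_def)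
lemma vcomb_snd: "snd (vcomb I a e) t = (\<Sum>i\<in>I. a i * snd (e i) t)" by (simp add: vcomb_def)

lemma vcomb_cong: "(\<And>i. i \<in> I \<Longrightarrow> a i = b i) \<Longrightarrow> vcomb I a e = vcomb I b e"
  by (simp add: vcomb_def)

lemma vcomb_double:
  assumes "finite F" "finite J"
  shows "vcomb F a (\<lambda>f. vcomb J (co f) e) = vcomb J (\<lambda>j. \<Sum>f\<in>F. a f * co f j) e"
proof -
  have "(\<Sum>f\<in>F. a f * (\<Sum>j\<in>J. co f j * h j)) = (\<Sum>j\<in>J. (\<Sum>f\<in>F. a f * co f j) * h j)"
    for h :: "_ \<Rightarrow> complex"
    by (simp add: sum_distrib_left sum_distrib_right mult.assoc) (rule sum.swap)
  then show ?thesis by (simp add: vcomb_def)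
qed

context two begin

lemma veq_comb:
  assumes "finite I" "\<And>i. i \<in> I \<Longrightarrow> veq (u i) (w i)"
  shows "veq (vcomb I a u) (vcomb I a w)"
proof -
  have "AE t in Mp. \<forall>i\<in>I. fst (u i) t - fst (w i) t = 0"
    using assms by (intro eventually_ball_finite) (auto simp: vnull_def nullf_def vsub_def)
  then have 1: "AE t in Mp. fst (vcomb I a u) t - fst (vcomb I a w) t = 0"
  proof eventually_elim
    case (elim t)
    have "fst (vcomb I a u) t - fst (vcomb I a w) t = (\<Sum>i\<in>I. a i * (fst (u i) t - fst (w i) t))"
      by (simp add: vcomb_def sum_subtractf[symmetric] algebra_simps)
    also have "\<dots> = 0" using elim by simp
    finally show ?case .
  qed
  have "AE t in Mm. \<forall>i\<in>I. snd (u i) t - snd (w i) t = 0"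
    using assms by (intro eventually_ball_finite) (auto simp: vnull_def nullf_def vsub_def)
  then have 2: "AE t in Mm. snd (vcomb I a u) t - snd (vcomb I a w) t = 0"
  proof eventually_elim
    case (elim t)
    have "snd (vcomb I a u) t - snd (vcomb I a w) t = (\<Sum>i\<in>I. a i * (snd (u i) t - snd (w i) t))"
      by (simp add: vcomb_def sum_subtractf[symmetric] algebra_simps)
    also have "\<dots> = 0" using elim by simp
    finally show ?case .
  qed
  from 1 2 show ?thesis by (simp add: vnull_def nullf_def vsub_def)
qed

lemma indep_vcomb: "indep_mod Mp Mm F \<longleftrightarrow> (\<forall>a. vn (vcomb F a id) \<longrightarrow> (\<forall>v\<in>F. a v = 0))"
  by (simp add: indep_mod_def vcomb_def)

lemma indep_bound:
  assumes fin: "finite F" and ind: "indep_mod Mp Mm F"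
    and sp: "\<And>f. f \<in> F \<Longrightarrow> \<exists>b. veq f (vcomb {1..k} b e)"
  shows "card F \<le> k"
proof -
  obtain co where co: "\<And>f. f \<in> F \<Longrightarrow> veq f (vcomb {1..k} (co f) e)" using sp by metis
  define co' where "co' f j = (if j \<in> {1..k} then co f j else 0)" for f j
  have co': "veq f (vcomb {1..k} (co' f) e)" if "f \<in> F" for f
  proof -
    have "vcomb {1..k} (co' f) e = vcomb {1..k} (co f) e" by (rule vcomb_cong) (simp add: co'_def)
    then show ?thesis using co[OF that] by simp
  qed
  have inj: "inj_on co' F"
  proof (rule inj_onI, rule ccontr)
    fix f g assume fg: "f \<in> F" "g \<in> F" "co' f = co' g" "f \<noteq> g"
    have "veq f (vcomb {1..k} (co' g) e)" using co'[OF fg(1)] fg(3) by simp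
    then have fg': "veq f g" by (rule veq_trans[OF _ veq_sym[OF co'[OF fg(2)]]])
    define a where "a w = (if w = f then 1 else if w = g then -1 else (0::complex))" for w
    have s: "(\<Sum>w\<in>F. a w * h w) = h f - h g" for h :: "vec \<Rightarrow> complex"
    proof -
      have "(\<Sum>w\<in>F. a w * h w) = (\<Sum>w\<in>F. (if w = f then h f else 0) + (if w = g then - h g else 0))"
        by (rule sum.cong) (auto simp: a_def fg(4))
      also have "\<dots> = (\<Sum>w\<in>F. (if w = f then h f else 0)) + (\<Sum>w\<in>F. (if w = g then - h g else 0))"
        by (rule sum.distrib)
      also have "\<dots> = h f + (- h g)" using fg(1,2) fin by (simp only: sum.delta if_True)
      finally show ?thesis by simp
    qed
    have "vcomb F a id = vsub f g" unfolding vcomb_def vsub_def prod_eq_iff fst_conv snd_conv id_def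
    proof (intro conjI ext)
      fix t show "(\<Sum>w\<in>F. a w * fst w t) = fst f t - fst g t" by (rule s)
      show "(\<Sum>w\<in>F. a w * snd w t) = snd f t - snd g t" by (rule s)
    qed
    with fg' have "vn (vcomb F a id)" by simp
    with ind fg(1) have "a f = 0" unfolding indep_vcomb by blast
    then show False by (simp add: a_def)
  qed
  have "card (co' ` F) \<le> k"
  proof (rule coef_bound)
    show "finite (co' ` F)" using fin by simp
    show "\<And>x j. x \<in> co' ` F \<Longrightarrow> j \<notin> {1..k} \<Longrightarrow> x j = 0" by (auto simp: co'_def)
    fix t u assume t: "finite t" "t \<subseteq> co' ` F" and z: "\<And>j. (\<Sum>x\<in>t. u x * x j) = 0"
    define Ft where "Ft = {f\<in>F. co' f \<in> t}"
    define a where "a f = (if co' f \<in> t then u (co' f) else 0)" for f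
    have bij: "co' ` Ft = t" using t(2) by (auto simp: Ft_def)
    have injt: "inj_on co' Ft" using inj by (rule inj_on_subset) (auto simp: Ft_def)
    have sumeq: "(\<Sum>f\<in>F. a f * co' f j) = 0" for j
    proof -
      have "(\<Sum>f\<in>F. a f * co' f j) = (\<Sum>f\<in>F. if co' f \<in> t then u (co' f) * co' f j else 0)"
        by (rule sum.cong) (simp_all add: a_def)
      also have "\<dots> = (\<Sum>f\<in>Ft. u (co' f) * co' f j)"
        unfolding Ft_def using fin by (simp add: sum.inter_filter)
      also have "\<dots> = (\<Sum>x\<in>t. u x * x j)"
        using sum.reindex[OF injt, of "\<lambda>x. u x * x j"] bij by simp
      finally show ?thesis using z by simp
    qed
    have "veq (vcomb F a id) (vcomb F a (\<lambda>f. vcomb {1..k} (co' f) e))"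
      by (rule veq_comb[OF fin]) (use co' in simp)
    also have "vcomb F a (\<lambda>f. vcomb {1..k} (co' f) e) = vcomb {1..k} (\<lambda>j. \<Sum>f\<in>F. a f * co' f j) e"
      by (rule vcomb_double[OF fin]) simp
    also have "\<dots> = vzero" by (simp add: vcomb_def vzero_def sumeq)
    finally have "vn (vcomb F a id)" by (simp add: vsub_def vzero_def id_def)
    with ind have a0: "\<forall>v\<in>F. a v = 0" unfolding indep_vcomb by blast
    show "\<forall>x\<in>t. u x = 0"
    proof
      fix x assume "x \<in> t"
      then obtain f where "f \<in> F" "x = co' f" using t(2) by auto
      then show "u x = 0" using a0 \<open>x \<in> t\<close> by (auto simp: a_def)
    qed
  qed
  then show ?thesis using card_image[OF inj] by simp
qed

end


lemma vlin_fst: "fst (vlin a v b w) t = a * fst v t + b * fst w t" by (simp add: vlin_def)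
lemma vlin_snd: "snd (vlin a v b w) t = a * snd v t + b * snd w t" by (simp add: vlin_def)

lemma vcomb_insert: "finite I \<Longrightarrow> i \<notin> I \<Longrightarrow> vcomb (insert i I) a e = vlin 1 (vcomb I a e) (a i) (e i)"
  by (simp add: vcomb_def vlin_def add.commute)

lemma vcomb_mono_neutral: "finite I \<Longrightarrow> J \<subseteq> I \<Longrightarrow> (\<And>i. i \<in> I - J \<Longrightarrow> a i = 0) \<Longrightarrow> vcomb I a e = vcomb J a e"
  unfolding vcomb_def by (auto intro!: ext sum.mono_neutral_right)

lemma vcomb_reindex: "inj_on h I \<Longrightarrow> vcomb (h ` I) a e = vcomb I (\<lambda>i. a (h i)) (\<lambda>i. e (h i))"
  unfolding vcomb_def by (simp add: sum.reindex)

lemma vcomb_single: "vcomb {i} a e = vlin (a i) (e i) 0 vzero"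
  by (simp add: vcomb_def vlin_def vzero_def)

definition Jset :: "nat \<Rightarrow> enat \<Rightarrow> nat set" where
  "Jset n K = {j. 1 \<le> j \<and> j \<le> n \<and> enat j \<le> K}"

lemma Jset_fin: "finite (Jset n K)" unfolding Jset_def by (rule finite_subset[of _ "{..n}"]) auto

context two begin

lemma veq_vlin: "veq u u' \<Longrightarrow> veq w w' \<Longrightarrow> veq (vlin a u b w) (vlin a u' b w')"
proof -
  assume 1: "veq u u'" and 2: "veq w w'"
  have p: "AE t in Mp. fst u t - fst u' t = 0" "AE t in Mp. fst w t - fst w' t = 0"
    and m: "AE t in Mm. snd u t - snd u' t = 0" "AE t in Mm. snd w t - snd w' t = 0"
    using 1 2 by (auto simp: vnull_def nullf_def vsub_def)
  have "AE t in Mp. fst (vlin a u b w) t - fst (vlin a u' b w') t = 0"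
    using p by eventually_elim (simp add: vlin_def algebra_simps)
  moreover have "AE t in Mm. snd (vlin a u b w) t - snd (vlin a u' b w') t = 0"
    using m by eventually_elim (simp add: vlin_def algebra_simps)
  ultimately show ?thesis by (simp add: vnull_def nullf_def vsub_def)
qed

lemma vn_iff_veq0: "veq v vzero \<longleftrightarrow> vn v" by (simp add: vsub_def vzero_def)

lemma vn_scale: assumes "vn (vlin a v 0 vzero)" "a \<noteq> 0" shows "vn v"
proof -
  have "AE t in Mp. a * fst v t = 0" "AE t in Mm. a * snd v t = 0"
    using assms(1) by (auto simp: vnull_def nullf_def vlin_def vzero_def)
  then have "AE t in Mp. fst v t = 0" "AE t in Mm. snd v t = 0"
    using assms(2) by (auto elim: eventually_mono)
  then show ?thesis by (simp add: vnull_def nullf_def)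
qed

end

locale chain = two +
  fixes z :: complex and e :: "nat \<Rightarrow> vec" and K :: enat
  assumes K1: "1 \<le> K"
    and H1a: "Dc z vzero (e 1)" and H1b: "\<not> vn (e 1)"
    and H1c: "\<And>v. Dc z vzero v \<Longrightarrow> \<exists>\<alpha>. veq v (vcomb {1} (\<lambda>_. \<alpha>) e)"
    and H2: "\<And>j. 1 \<le> j \<Longrightarrow> enat (Suc j) \<le> K \<Longrightarrow> Dc z (e j) (e (Suc j))"
    and H3: "\<And>k x. K = enat k \<Longrightarrow> \<not> Dc z (e k) x"
begin

lemma e_in_R: "1 \<le> j \<Longrightarrow> enat j \<le> K \<Longrightarrow> e j \<in> R z j"
proof (induction j)
  case 0 then show ?case by simp
next
  case (Suc j)
  show ?case
  proof (cases "j = 0")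
    case True
    then show ?thesis using H1a R_1 by simp
  next
    case False
    then have "e j \<in> R z j" using Suc by (intro Suc.IH) (auto intro: order_trans[of _ "enat (Suc j)"])
    moreover have "Dc z (e j) (e (Suc j))" using False Suc.prems by (intro H2) auto
    ultimately show ?thesis using R_Suc by blast
  qed
qed

lemma enat_between: "enat i \<le> K \<Longrightarrow> \<not> enat (Suc i) \<le> K \<Longrightarrow> K = enat i"
  by (cases K) auto

lemma span_R: "v \<in> R z n \<Longrightarrow> \<exists>b. veq v (vcomb (Jset n K) b e)"
proof (induction n arbitrary: v)
  case 0
  then have "vn v" by simp
  moreover have "Jset 0 K = {}" by (auto simp: Jset_def)
  moreover have "vcomb {} (\<lambda>_. 0) e = vzero" by (simp add: vcomb_def vzero_def)
  ultimately have "veq v (vcomb (Jset 0 K) (\<lambda>_. 0) e)" by (simp only: vn_iff_veq0)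
  then show ?case by blast
next
  case (Suc n)
  from Suc.prems obtain u where u: "u \<in> R z n" "Dc z u v" using R_Suc by blast
  from Suc.IH[OF u(1)] obtain b where b: "veq u (vcomb (Jset n K) b e)" by blast
  define J' where "J' = {j \<in> Jset n K. enat (Suc j) \<le> K}"
  have finJ': "finite J'" using Jset_fin[of n K] by (auto simp: J'_def)
  define y where "y = vcomb J' b (\<lambda>j. e (Suc j))"
  have Dy: "Dc z (vcomb J' b e) y" unfolding y_def
    by (rule Dc_comb[OF finJ']) (auto simp: J'_def Jset_def intro: H2)
  show ?case
  proof (cases "\<exists>k. K = enat k \<and> k \<in> Jset n K \<and> b k \<noteq> 0")
    case True
    then obtain k where k: "K = enat k" "k \<in> Jset n K" "b k \<noteq> 0" by blast
    have kJ: "k \<notin> J'" using k(1) by (auto simp: J'_def)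
    have JJ: "Jset n K = insert k J'"
      using k(1,2) by (auto simp: J'_def Jset_def dest: enat_between)
    have eqk: "vcomb (Jset n K) b e = vlin 1 (vcomb J' b e) (b k) (e k)"
      unfolding JJ by (rule vcomb_insert[OF finJ' kJ])
    have "Dc z (vlin (1 / b k) u (- 1 / b k) (vcomb J' b e)) (vlin (1 / b k) v (- 1 / b k) y)"
      by (rule Dc_lin[OF u(2) Dy])
    moreover have "veq (vlin (1 / b k) u (- 1 / b k) (vcomb J' b e))
        (vlin (1 / b k) (vlin 1 (vcomb J' b e) (b k) (e k)) (- 1 / b k) (vcomb J' b e))"
      using veq_vlin[OF b[unfolded eqk] veq_refl] by blast
    moreover have "vlin (1 / b k) (vlin 1 (vcomb J' b e) (b k) (e k)) (- 1 / b k) (vcomb J' b e) = e k"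
      using k(3) by (simp add: vlin_def prod_eq_iff fun_eq_iff field_simps)
    ultimately have "Dc z (e k) (vlin (1 / b k) v (- 1 / b k) y)" using Dc_cong_u by simp
    with H3[OF k(1)] show ?thesis by blast
  next
    case False
    have eq: "vcomb (Jset n K) b e = vcomb J' b e"
    proof (rule vcomb_mono_neutral[OF Jset_fin])
      show "J' \<subseteq> Jset n K" by (auto simp: J'_def)
      fix i assume i: "i \<in> Jset n K - J'"
      then have "K = enat i" by (auto simp: J'_def Jset_def intro: enat_between)
      with i False show "b i = 0" by auto
    qed
    have "Dc z (vcomb J' b e) v" using Dc_cong_u[OF u(2)] b eq by simp
    from Dc_lin[OF this Dy, of 1 "-1"]
    have "Dc z (vlin 1 (vcomb J' b e) (-1) (vcomb J' b e)) (vlin 1 v (-1) y)" .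
    moreover have "vlin 1 (vcomb J' b e) (-1) (vcomb J' b e) = vzero"
      by (simp add: vlin_def vzero_def)
    ultimately have "Dc z vzero (vlin 1 v (-1) y)" by simp
    from H1c[OF this] obtain \<alpha> where al: "veq (vlin 1 v (-1) y) (vcomb {1} (\<lambda>_. \<alpha>) e)" by blast
    define b' where "b' j = (if j = 1 then \<alpha> else b (j - 1))" for j
    have Jsuc: "Jset (Suc n) K = insert 1 (Suc ` J')"
    proof
      show "insert 1 (Suc ` J') \<subseteq> Jset (Suc n) K"
        using K1 by (auto simp: J'_def Jset_def one_enat_def)
      show "Jset (Suc n) K \<subseteq> insert 1 (Suc ` J')"
      proof
        fix j assume j: "j \<in> Jset (Suc n) K"
        show "j \<in> insert 1 (Suc ` J')"
        proof (cases "j = 1")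
          case False
          then obtain i where i: "j = Suc i" "1 \<le> i" using j by (cases j) (auto simp: Jset_def)
          have "enat i \<le> K" using j i(1) by (auto simp: Jset_def intro: order_trans[of _ "enat (Suc i)"])
          then have "i \<in> J'" using j i by (auto simp: J'_def Jset_def)
          then show ?thesis using i by auto
        qed simp
      qed
    qed
    have 1: "1 \<notin> Suc ` J'" by (auto simp: J'_def Jset_def)
    have "vcomb (Jset (Suc n) K) b' e = vlin 1 (vcomb (Suc ` J') b' e) \<alpha> (e 1)"
    proof -
      have "vcomb (insert 1 (Suc ` J')) b' e = vlin 1 (vcomb (Suc ` J') b' e) (b' 1) (e 1)"
        by (rule vcomb_insert) (use finJ' 1 in simp_all)
      then show ?thesis unfolding Jsuc by (simp add: b'_def)
    qed
    also have "vcomb (Suc ` J') b' e = y"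
      unfolding y_def by (simp add: vcomb_reindex b'_def) (rule vcomb_cong, auto simp: J'_def Jset_def)
    finally have eqs: "vcomb (Jset (Suc n) K) b' e = vlin 1 y \<alpha> (e 1)" .
    have "veq (vlin 1 (vlin 1 v (-1) y) 1 y) (vlin 1 (vcomb {1} (\<lambda>_. \<alpha>) e) 1 y)"
      by (rule veq_vlin[OF al veq_refl])
    moreover have "vlin 1 (vlin 1 v (-1) y) 1 y = v" by (simp add: vlin_def)
    moreover have "vlin 1 (vcomb {1} (\<lambda>_. \<alpha>) e) 1 y = vlin 1 y \<alpha> (e 1)"
      by (simp add: vlin_def vcomb_def prod_eq_iff fun_eq_iff add.commute)
    ultimately have "veq v (vlin 1 y \<alpha> (e 1))" by simp
    then show ?thesis unfolding eqs[symmetric] by blast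
  qed
qed

end


lemma vcomb_shift: "vcomb {Suc m..Suc n} a u = vcomb {m..n} (\<lambda>i. a (Suc i)) (\<lambda>i. u (Suc i))"
  unfolding vcomb_def by (simp only: sum.shift_bounds_cl_Suc_ivl)

lemma vcomb_cong_e: "(\<And>i. i \<in> I \<Longrightarrow> e i = e' i) \<Longrightarrow> vcomb I a e = vcomb I a e'"
  by (simp add: vcomb_def)

lemma ivl_split: "{1..Suc k} = insert 1 {Suc 1..Suc k}" by auto

context chain begin

lemma chain_indep: "enat k \<le> K \<Longrightarrow> vn (vcomb {1..k} a e) \<Longrightarrow> \<forall>j\<in>{1..k}. a j = 0"
proof (induction k arbitrary: a)
  case 0 then show ?case by simp
next
  case (Suc k)
  define u where "u j = (if j = 1 then vzero else e (j - 1))" for j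
  have Du: "Dc z (u j) (e j)" if "j \<in> {1..Suc k}" for j
  proof (cases "j = 1")
    case True then show ?thesis using H1a by (simp add: u_def)
  next
    case False
    then have "1 \<le> j - 1" "enat (Suc (j - 1)) \<le> K" using that Suc.prems(1)
      by (auto intro: order_trans[of _ "enat (Suc k)"])
    from H2[OF this] show ?thesis using False that by (simp add: u_def)
  qed
  have "Dc z (vcomb {1..Suc k} a u) (vcomb {1..Suc k} a e)"
    by (rule Dc_comb) (auto intro: Du)
  from Dc_null[OF this Suc.prems(2)] have nu: "vn (vcomb {1..Suc k} a u)" .
  have "vcomb {1..Suc k} a u = vlin 1 (vcomb {Suc 1..Suc k} a u) (a 1) (u 1)"
    unfolding ivl_split by (rule vcomb_insert) auto
  also have "vcomb {Suc 1..Suc k} a u = vcomb {1..k} (\<lambda>i. a (Suc i)) e"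
    unfolding vcomb_shift by (rule vcomb_cong_e) (auto simp: u_def)
  also have "vlin 1 (vcomb {1..k} (\<lambda>i. a (Suc i)) e) (a 1) (u 1) = vcomb {1..k} (\<lambda>i. a (Suc i)) e"
    by (simp add: vlin_def u_def vzero_def)
  finally have "vn (vcomb {1..k} (\<lambda>i. a (Suc i)) e)" using nu by simp
  then have aS: "\<forall>j\<in>{1..k}. a (Suc j) = 0" using Suc.IH Suc.prems(1)
    by (meson Suc_ile_eq order_less_imp_le)
  have "vcomb {1..Suc k} a e = vlin 1 (vcomb {Suc 1..Suc k} a e) (a 1) (e 1)"
    unfolding ivl_split by (rule vcomb_insert) auto
  also have "vcomb {Suc 1..Suc k} a e = vcomb {1..k} (\<lambda>i. a (Suc i)) (\<lambda>i. e (Suc i))"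
    by (rule vcomb_shift)
  also have "\<dots> = vcomb {1..k} (\<lambda>i. 0) (\<lambda>i. e (Suc i))" by (rule vcomb_cong) (use aS in auto)
  also have "vlin 1 (vcomb {1..k} (\<lambda>i. 0) (\<lambda>i. e (Suc i))) (a 1) (e 1) = vlin (a 1) (e 1) 0 vzero"
    by (simp add: vlin_def vcomb_def vzero_def)
  finally have "vn (vlin (a 1) (e 1) 0 vzero)" using Suc.prems(2) by simp
  then have "a 1 = 0" using vn_scale H1b by blast
  with aS show ?case by (metis atLeastAtMost_iff le_antisym not_less_eq_eq Suc_pred' le_zero_eq One_nat_def neq0_conv)
qed

end


context chain begin

lemma e_inj: assumes "enat k \<le> K" shows "inj_on e {1..k}"
proof (rule inj_onI, rule ccontr)
  fix i j assume ij: "i \<in> {1..k}" "j \<in> {1..k}" "e i = e j" "i \<noteq> j"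
  define a where "a l = (if l = i then 1 else if l = j then -1 else (0::complex))" for l
  have s: "(\<Sum>l\<in>{1..k}. a l * h l) = h i - h j" for h :: "nat \<Rightarrow> complex"
  proof -
    have "(\<Sum>l\<in>{1..k}. a l * h l) = (\<Sum>l\<in>{1..k}. (if l = i then h i else 0) + (if l = j then - h j else 0))"
      by (rule sum.cong) (auto simp: a_def ij(4))
    also have "\<dots> = (\<Sum>l\<in>{1..k}. (if l = i then h i else 0)) + (\<Sum>l\<in>{1..k}. (if l = j then - h j else 0))"
      by (rule sum.distrib)
    also have "\<dots> = h i + (- h j)" using ij(1,2) by (simp only: sum.delta finite_atLeastAtMost if_True)
    finally show ?thesis by simp
  qed
  have "vcomb {1..k} a e = vzero"
    unfolding vcomb_def vzero_def prod_eq_iff fst_conv snd_conv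
    by (intro conjI ext) (simp_all only: s ij(3) diff_self)
  then have "vn (vcomb {1..k} a e)" by (simp add: vnull_def nullf_def vzero_def)
  from chain_indep[OF assms this] ij(1) have "a i = 0" by blast
  then show False by (simp add: a_def)
qed

lemma e_indep: assumes "enat k \<le> K" shows "indep_mod Mp Mm (e ` {1..k})"
  unfolding indep_vcomb
proof (intro allI impI ballI)
  fix a v assume n: "vn (vcomb (e ` {1..k}) a id)" and v: "v \<in> e ` {1..k}"
  have "vcomb (e ` {1..k}) a id = vcomb {1..k} (\<lambda>i. a (e i)) e"
    using vcomb_reindex[OF e_inj[OF assms], of a id] by simp
  with n have "vn (vcomb {1..k} (\<lambda>i. a (e i)) e)" by simp
  from chain_indep[OF assms this] v show "a v = 0" by auto
qed

lemma e_in_U: "1 \<le> j \<Longrightarrow> enat j \<le> K \<Longrightarrow> e j \<in> (\<Union>n. R z n)"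
  using e_in_R by blast

lemma U_span: assumes "v \<in> (\<Union>n. R z n)" "K = enat k" shows "\<exists>b. veq v (vcomb {1..k} b e)"
proof -
  from assms(1) obtain n where "v \<in> R z n" by blast
  from span_R[OF this] obtain b where b: "veq v (vcomb (Jset n K) b e)" by blast
  define b' where "b' j = (if j \<in> Jset n K then b j else 0)" for j
  have "vcomb {1..k} b' e = vcomb (Jset n K) b' e"
    by (rule vcomb_mono_neutral) (use assms(2) in \<open>auto simp: Jset_def b'_def\<close>)
  also have "\<dots> = vcomb (Jset n K) b e" by (rule vcomb_cong) (simp add: b'_def)
  finally have "veq v (vcomb {1..k} b' e)" using b by simp
  then show ?thesis by blast
qed

lemma alg: "alg_mult Mp Mm A z = K"
proof -
  define X where "X = {enat (card F) | F. finite F \<and> F \<subseteq> (\<Union>n. R z n) \<and> indep_mod Mp Mm F}"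
  have mem: "enat k \<in> X" if "enat k \<le> K" for k
  proof -
    have "card (e ` {1..k}) = k" using card_image[OF e_inj[OF that]] by simp
    moreover have "e ` {1..k} \<subseteq> (\<Union>n. R z n)"
    proof
      fix x assume "x \<in> e ` {1..k}"
      then obtain j where j: "x = e j" "1 \<le> j" "j \<le> k" by auto
      have "enat j \<le> K" using j(3) that by (auto intro: order_trans[of _ "enat k"])
      then show "x \<in> (\<Union>n. R z n)" using e_in_U j by blast
    qed
    moreover have "finite (e ` {1..k})" by simp
    ultimately have "enat k = enat (card (e ` {1..k})) \<and> finite (e ` {1..k}) \<and> e ` {1..k} \<subseteq> (\<Union>n. R z n)
       \<and> indep_mod Mp Mm (e ` {1..k})" using e_indep[OF that] by simp
    then show ?thesis unfolding X_def by blast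
  qed
  have "Sup X = K"
  proof (cases K)
    case (enat k)
    show ?thesis
    proof (rule Sup_eqI)
      fix y assume "y \<in> X"
      then obtain F where F: "y = enat (card F)" "finite F" "F \<subseteq> (\<Union>n. R z n)" "indep_mod Mp Mm F"
        unfolding X_def by blast
      have "card F \<le> k"
      proof (rule indep_bound[OF F(2,4)])
        fix f assume "f \<in> F"
        then have "f \<in> (\<Union>n. R z n)" using F(3) by blast
        then show "\<exists>b. veq f (vcomb {1..k} b e)" by (rule U_span[OF _ enat])
      qed
      then show "y \<le> K" using F(1) enat by simp
    next
      fix y assume "\<And>x. x \<in> X \<Longrightarrow> x \<le> y"
      then show "K \<le> y" using mem[of k] enat by simp
    qed
  next
    case infinity
    show ?thesis
    proof (rule Sup_eqI)
      show "\<And>y. y \<in> X \<Longrightarrow> y \<le> K" using infinity by simp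
      fix y assume ub: "\<And>x. x \<in> X \<Longrightarrow> x \<le> y"
      show "K \<le> y"
      proof (cases y)
        case (enat m)
        have "enat (Suc m) \<le> y" using ub mem[of "Suc m"] infinity by simp
        then show ?thesis using enat by simp
      qed (simp)
    qed
  qed
  then show ?thesis unfolding alg_mult_def dim_mod_def X_def by simp
qed

lemma eig: "z \<in> op_sigma_p Mp Mm A"
proof -
  have "e 1 \<in> R z 1" using R_1 H1a by blast
  then show ?thesis unfolding op_sigma_p_def mem_Collect_eq using H1b by blast
qed

lemma geom: "geom_mult Mp Mm A z = 1"
proof -
  define X where "X = {enat (card F) | F. finite F \<and> F \<subseteq> R z 1 \<and> indep_mod Mp Mm F}"
  have "Sup X = 1"
  proof (rule Sup_eqI)
    fix y assume "y \<in> X"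
    then obtain F where F: "y = enat (card F)" "finite F" "F \<subseteq> R z 1" "indep_mod Mp Mm F"
      unfolding X_def by blast
    have "card F \<le> 1"
    proof (rule indep_bound[OF F(2,4)])
      fix f assume "f \<in> F"
      then have "Dc z vzero f" using F(3) R_1 by blast
      from H1c[OF this] obtain \<alpha> where "veq f (vcomb {1} (\<lambda>_. \<alpha>) e)" by blast
      moreover have "{1..1::nat} = {1}" by simp
      ultimately show "\<exists>b. veq f (vcomb {1..1} b e)" by metis
    qed
    then show "y \<le> 1" using F(1) by (simp add: one_enat_def)
  next
    fix y assume ub: "\<And>x. x \<in> X \<Longrightarrow> x \<le> y"
    have "enat 1 \<le> K" using K1 by (simp add: one_enat_def)
    then have "indep_mod Mp Mm (e ` {1..1})" by (rule e_indep)
    moreover have "e ` {1..1} \<subseteq> R z 1" using R_1 H1a by auto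
    ultimately have "enat (card (e ` {1..1})) \<in> X" unfolding X_def by blast
    then show "1 \<le> y" using ub by (simp add: one_enat_def)
  qed
  then show ?thesis unfolding geom_mult_def dim_mod_def X_def by simp
qed

end


context side begin

lemma AE_False_imp: assumes "AE t in M. False" shows False
proof -
  have "ae_filter M = bot" using assms trivial_limit_def by blast
  then have "emeasure M (space M) = 0" by (simp add: ae_filter_eq_bot_iff)
  with infM show False by simp
qed

lemma Zset: "{t. complex_of_real t = z} = (if Im z = 0 then {Re z} else {})"
  by (auto simp: complex_eq_iff)

lemma Z_sets: "{t. complex_of_real t = z} \<in> sets M"
  unfolding Zset by (simp add: sets_M)

lemma AE_notZ: assumes "emeasure M {t. complex_of_real t = z} = 0"
  shows "AE t in M. complex_of_real t \<noteq> z"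
proof -
  have "{t. complex_of_real t = z} \<in> null_sets M" using assms Z_sets by auto
  from AE_not_in[OF this] show ?thesis by simp
qed

lemma atomZ: assumes "emeasure M {t. complex_of_real t = z} \<noteq> 0"
  shows "z = complex_of_real (Re z) \<and> {t. complex_of_real t = z} = {Re z}"
  using assms unfolding Zset by (cases "Im z = 0") (auto simp: complex_eq_iff)

lemma Zfin: "emeasure M {t. complex_of_real t = z} < \<infinity>"
  unfolding Zset using atom_fin by auto

lemma sok_atom: assumes "emeasure M {r} \<noteq> 0" "z = complex_of_real r" "sok M z f g c"
  shows "g r = - c"
proof -
  have "AE t in M. (complex_of_real t - z) * f t - c = g t" using assms(3) by (simp add: sok_def)
  from AE_atom[OF assms(1) this] assms(2) show ?thesis by simp
qed

lemma sok_off: assumes "sok M z f g c"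
  shows "AE t in M. complex_of_real t \<noteq> z \<longrightarrow> f t = (g t + c) / (complex_of_real t - z)"
  using assms unfolding sok_def
  by (auto elim!: eventually_mono simp: field_simps)

lemma sigp: "z \<in> sigma_p_Q M \<longleftrightarrow> emeasure M {t. complex_of_real t = z} \<noteq> 0"
proof
  assume "z \<in> sigma_p_Q M"
  then obtain f where f: "\<not> nullf M f" "nullf M (\<lambda>t. (complex_of_real t - z) * f t)"
    by (auto simp: sigma_p_Q_def)
  show "emeasure M {t. complex_of_real t = z} \<noteq> 0"
  proof
    assume "emeasure M {t. complex_of_real t = z} = 0"
    from AE_notZ[OF this] f(2) have "AE t in M. f t = 0"
      by (auto simp: nullf_def elim: eventually_rev_mp)
    with f(1) show False by (simp add: nullf_def)
  qed
next
  assume ne: "emeasure M {t. complex_of_real t = z} \<noteq> 0"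
  from atomZ[OF this] have z: "z = complex_of_real (Re z)" and Z: "{t. complex_of_real t = z} = {Re z}" by auto
  define r where "r = Re z"
  define f where "f t = complex_of_real (indicator {r} t)" for t
  have ne': "emeasure M {r} \<noteq> 0" using ne Z by (simp add: r_def)
  have [measurable]: "f \<in> borel_measurable M" unfolding f_def by (simp add: sets_M)
  have intf: "integrable M (\<lambda>t. (cmod (f t))^2)"
  proof -
    have "integrable M (indicator {r} :: real \<Rightarrow> real)"
      using atom_fin[of r] by (simp add: sets_M less_top)
    moreover have "(\<lambda>t. (cmod (f t))^2) = (indicator {r} :: real \<Rightarrow> real)"
      by (auto simp: f_def fun_eq_iff split: split_indicator)
    ultimately show ?thesis by simp
  qed
  have Lf: "L2 M f" by (simp add: L2_def intf)
  have "L2 M (\<lambda>t. complex_of_real t * f t)"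
  proof (rule L2_cong[OF L2_scale[OF Lf, of "complex_of_real r"]])
    show "(\<lambda>t. complex_of_real t * f t) \<in> borel_measurable M" by measurable
    show "AE t in M. complex_of_real t * f t = complex_of_real r * f t"
      by (rule AE_I2) (simp add: f_def split: split_indicator)
  qed
  moreover have "\<not> nullf M f"
  proof
    assume "nullf M f"
    then have "AE t in M. f t = 0" by (simp add: nullf_def)
    from AE_atom[OF ne' this] show False by (simp add: f_def)
  qed
  moreover have "nullf M (\<lambda>t. (complex_of_real t - z) * f t)"
    unfolding nullf_def by (rule AE_I2) (simp add: f_def r_def z[symmetric] split: split_indicator)
  ultimately show "z \<in> sigma_p_Q M" unfolding sigma_p_Q_def domQ_def using Lf by blast
qed

lemma norm_pow_inv: "(cmod (1 / (complex_of_real t - z)^j))^2 = 1 / (cmod (complex_of_real t - z))^(2*j)"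
  by (simp add: norm_divide norm_power power_mult power_divide) (metis mult.commute power_mult)

lemma L2_pow_iff: "L2 M (\<lambda>t. 1 / (complex_of_real t - z)^j) \<longleftrightarrow>
    (\<integral>\<^sup>+ t. ennreal (1 / (cmod (complex_of_real t - z))^(2*j)) \<partial>M) < \<infinity>"
proof -
  have m: "(\<lambda>t. 1 / (complex_of_real t - z)^j) \<in> borel_measurable M" by measurable
  have m2: "(\<lambda>t. 1 / (cmod (complex_of_real t - z))^(2*j)) \<in> borel_measurable M" by measurable
  have "L2 M (\<lambda>t. 1 / (complex_of_real t - z)^j) \<longleftrightarrow> integrable M (\<lambda>t. 1 / (cmod (complex_of_real t - z))^(2*j))"
    using m by (simp add: L2_def norm_pow_inv)
  also have "\<dots> \<longleftrightarrow> (\<integral>\<^sup>+ t. ennreal (1 / (cmod (complex_of_real t - z))^(2*j)) \<partial>M) < \<infinity>"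
    using m2 by (simp add: integrable_iff_bounded)
  finally show ?thesis .
qed

lemma nn_ind: assumes "1 \<le> j"
  shows "(\<integral>\<^sup>+ t. indicator {t. complex_of_real t \<noteq> z} t * ennreal (1 / (cmod (complex_of_real t - z))^(2*j)) \<partial>M)
    = (\<integral>\<^sup>+ t. ennreal (1 / (cmod (complex_of_real t - z))^(2*j)) \<partial>M)"
  using assms by (intro nn_integral_cong) (auto split: split_indicator)

lemma set_int_ind: assumes "1 \<le> i"
  shows "set_lebesgue_integral M {t. complex_of_real t \<noteq> z} (\<lambda>t. 1 / (complex_of_real t - z)^i)
    = (\<integral> t. 1 / (complex_of_real t - z)^i \<partial>M)"
  unfolding set_lebesgue_integral_def
  using assms by (intro Bochner_Integration.integral_cong) (auto split: split_indicator)

end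


context side begin

lemma L_inf:
  assumes s: "sok M z f g c" and g: "AE t in M. g t = 0"
    and Z: "emeasure M {t. complex_of_real t = z} = 0"
    and inf: "(\<integral>\<^sup>+ t. ennreal (1 / (cmod (complex_of_real t - z))^2) \<partial>M) = \<infinity>"
  shows "c = 0"
proof (rule ccontr)
  assume c: "c \<noteq> 0"
  have f: "L2 M f" using s by (simp add: sok_def)
  have ae: "AE t in M. f t = c / (complex_of_real t - z)"
    using sok_off[OF s] g AE_notZ[OF Z] by eventually_elim simp
  have [measurable]: "f \<in> borel_measurable M" using f by (simp add: L2_def)
  have "(\<integral>\<^sup>+ t. ennreal ((cmod (f t))^2) \<partial>M)
      = (\<integral>\<^sup>+ t. ennreal ((cmod c)^2) * ennreal (1 / (cmod (complex_of_real t - z))^2) \<partial>M)"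
    by (rule nn_integral_cong_AE) (use ae in \<open>auto elim!: eventually_mono simp: norm_divide power_divide ennreal_mult[symmetric]\<close>)
  also have "\<dots> = ennreal ((cmod c)^2) * (\<integral>\<^sup>+ t. ennreal (1 / (cmod (complex_of_real t - z))^2) \<partial>M)"
    by (rule nn_integral_cmult) measurable
  also have "\<dots> = \<infinity>" using inf c by simp
  finally have "(\<integral>\<^sup>+ t. ennreal ((cmod (f t))^2) \<partial>M) = \<infinity>" .
  moreover have "integrable M (\<lambda>t. (cmod (f t))^2)" using f by (simp add: L2_def)
  then have "(\<integral>\<^sup>+ t. ennreal (norm ((cmod (f t))^2)) \<partial>M) < \<infinity>" by (simp only: integrable_iff_bounded)
  ultimately show False by simp
qed

lemma L_Z0: assumes s: "sok M z f g 0" and g: "AE t in M. g t = 0"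
    and Z: "emeasure M {t. complex_of_real t = z} = 0"
  shows "AE t in M. f t = 0"
  using sok_off[OF s] g AE_notZ[OF Z] by eventually_elim simp

lemma L_zero_int: assumes s: "sok M z f g 0" and g: "AE t in M. g t = 0" and i: "integral\<^sup>L M f = 0"
  shows "AE t in M. f t = 0"
proof (cases "emeasure M {t. complex_of_real t = z} = 0")
  case True then show ?thesis using L_Z0[OF s g] by simp
next
  case False
  from atomZ[OF False] have z: "z = complex_of_real (Re z)" and Z: "{t. complex_of_real t = z} = {Re z}" by auto
  define r where "r = Re z"
  have ne: "emeasure M {r} \<noteq> 0" using False Z by (simp add: r_def)
  have fin: "emeasure M {r} < \<infinity>" by (rule atom_fin)
  have f: "f \<in> borel_measurable M" using s by (simp add: sok_def L2_def)
  have ae: "AE t in M. f t = f r * complex_of_real (indicator {r} t)"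
    using sok_off[OF s] g
  proof eventually_elim
    case (elim t)
    show ?case
    proof (cases "t = r")
      case False
      then have "complex_of_real t \<noteq> z" using z by (simp add: r_def) (metis Re_complex_of_real)
      then show ?thesis using elim False by simp
    qed simp
  qed
  have "integral\<^sup>L M f = (\<integral> t. f r * complex_of_real (indicator {r} t) \<partial>M)"
    by (rule integral_cong_AE[OF f]) (simp add: sets_M, use ae in auto)
  also have "\<dots> = f r * complex_of_real (measure M {r})" by (simp add: sets_M)
  finally have "f r * complex_of_real (measure M {r}) = 0" using i by simp
  moreover have "measure M {r} \<noteq> 0" using ne fin by (simp add: measure_def enn2real_eq_0_iff)
  ultimately have "f r = 0" by simp
  with ae show ?thesis by simp
qed

end

context two begin

lemma no_eig:
  assumes "z \<in> op_sigma_p Mp Mm A"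
    and c0: "\<And>v c. sok Mp z (fst v) (\<lambda>t. 0) c \<Longrightarrow> sok Mm z (snd v) (\<lambda>t. 0) c \<Longrightarrow> c = 0"
    and Z: "emeasure Mp {t. complex_of_real t = z} = 0 \<or> emeasure Mm {t. complex_of_real t = z} = 0"
  shows False
proof -
  from assms(1) obtain v where v: "v \<in> R z 1" "\<not> vn v" unfolding op_sigma_p_def mem_Collect_eq by blast
  from v(1) have "Dc z vzero v" using R_1 by blast
  then obtain c where c: "sok Mp z (fst v) (\<lambda>t. 0) c" "sok Mm z (snd v) (\<lambda>t. 0) c"
    "integral\<^sup>L Mp (fst v) = integral\<^sup>L Mm (snd v)" by (auto simp: Dc_def vzero_def)
  have c0': "c = 0" using c0[OF c(1,2)] .
  from Z have "vn v"
  proof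
    assume Zp: "emeasure Mp {t. complex_of_real t = z} = 0"
    have 1: "AE t in Mp. fst v t = 0" using P.L_Z0[OF c(1)[unfolded c0'] _ Zp] by simp
    then have "integral\<^sup>L Mp (fst v) = 0" by (simp add: integral_eq_zero_AE)
    then have "AE t in Mm. snd v t = 0" using N.L_zero_int[OF c(2)[unfolded c0']] c(3) by simp
    with 1 show "vn v" by (simp add: vnull_def nullf_def)
  next
    assume Zm: "emeasure Mm {t. complex_of_real t = z} = 0"
    have 1: "AE t in Mm. snd v t = 0" using N.L_Z0[OF c(2)[unfolded c0'] _ Zm] by simp
    then have "integral\<^sup>L Mm (snd v) = 0" by (simp add: integral_eq_zero_AE)
    then have "AE t in Mp. fst v t = 0" using P.L_zero_int[OF c(1)[unfolded c0']] c(3) by simp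
    with 1 show "vn v" by (simp add: vnull_def nullf_def)
  qed
  with v(2) show False by simp
qed

lemma part1: assumes "z \<in> A0 Mp \<union> A0 Mm" shows "z \<notin> op_sigma_p Mp Mm A"
proof
  assume e: "z \<in> op_sigma_p Mp Mm A"
  from assms show False
  proof
    assume z: "z \<in> A0 Mp"
    then have Zp: "emeasure Mp {t. complex_of_real t = z} = 0" and inf: "(\<integral>\<^sup>+ t. ennreal (1 / (cmod (complex_of_real t - z))^2) \<partial>Mp) = \<infinity>"
      using P.sigp by (auto simp: A0_def sigma_c_Q_def)
    show False
      by (rule no_eig[OF e]) (use P.L_inf[OF _ _ Zp inf] Zp in auto)
  next
    assume z: "z \<in> A0 Mm"
    then have Zm: "emeasure Mm {t. complex_of_real t = z} = 0" and inf: "(\<integral>\<^sup>+ t. ennreal (1 / (cmod (complex_of_real t - z))^2) \<partial>Mm) = \<infinity>"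
      using N.sigp by (auto simp: A0_def sigma_c_Q_def)
    show False
      by (rule no_eig[OF e]) (use N.L_inf[OF _ _ Zm inf] Zm in auto)
  qed
qed

lemma part4: assumes "z \<in> (Ap Mp \<inter> Ar Mm) \<union> (Ap Mm \<inter> Ar Mp)" shows "z \<notin> op_sigma_p Mp Mm A"
proof
  assume e: "z \<in> op_sigma_p Mp Mm A"
  from assms show False
  proof
    assume z: "z \<in> Ap Mp \<inter> Ar Mm"
    then have Zp: "emeasure Mp {t. complex_of_real t = z} \<noteq> 0" and Zm: "emeasure Mm {t. complex_of_real t = z} = 0"
      using P.sigp N.sigp by (auto simp: Ap_def Ar_def)
    from P.atomZ[OF Zp] have zr: "z = complex_of_real (Re z)" "emeasure Mp {Re z} \<noteq> 0" using Zp by auto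
    show False
    proof (rule no_eig[OF e])
      fix v c assume "sok Mp z (fst v) (\<lambda>t. 0) c"
      from P.sok_atom[OF zr(2) zr(1) this] show "c = 0" by simp
    qed (use Zm in simp)
  next
    assume z: "z \<in> Ap Mm \<inter> Ar Mp"
    then have Zm: "emeasure Mm {t. complex_of_real t = z} \<noteq> 0" and Zp: "emeasure Mp {t. complex_of_real t = z} = 0"
      using P.sigp N.sigp by (auto simp: Ap_def Ar_def)
    from N.atomZ[OF Zm] have zr: "z = complex_of_real (Re z)" "emeasure Mm {Re z} \<noteq> 0" using Zm by auto
    show False
    proof (rule no_eig[OF e])
      fix v c assume "sok Mm z (snd v) (\<lambda>t. 0) c"
      from N.sok_atom[OF zr(2) zr(1) this] show "c = 0" by simp
    qed (use Zp in simp)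
  qed
qed

end


lemma greatest1:
  fixes P :: "nat \<Rightarrow> bool" assumes P1: "P 1"
  shows "\<exists>K. is_greatest {k. 1 \<le> k \<and> (\<forall>j::nat. 1 \<le> j \<and> enat j \<le> k \<longrightarrow> P j)} K \<and> 1 \<le> K
    \<and> (\<forall>j. 1 \<le> j \<and> enat j \<le> K \<longrightarrow> P j) \<and> (\<forall>k. K = enat k \<longrightarrow> \<not> P (Suc k))"
proof (cases "\<forall>j. 1 \<le> j \<longrightarrow> P j")
  case True
  then show ?thesis by (intro exI[of _ \<infinity>]) (auto simp: is_greatest_def)
next
  case False
  define n where "n = (LEAST j. 1 \<le> j \<and> \<not> P j)"
  have n: "1 \<le> n" "\<not> P n" using LeastI_ex[of "\<lambda>j. 1 \<le> j \<and> \<not> P j"] False unfolding n_def by auto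
  have lt: "\<And>j. 1 \<le> j \<Longrightarrow> j < n \<Longrightarrow> P j" using not_less_Least[of _ "\<lambda>j. 1 \<le> j \<and> \<not> P j"] unfolding n_def by blast
  have n2: "2 \<le> n" using n P1 by (cases "n = 1") auto
  show ?thesis
  proof (intro exI[of _ "enat (n - 1)"] conjI allI impI)
    show "1 \<le> enat (n - 1)" using n2 by (simp add: one_enat_def)
    show "P j" if "1 \<le> j \<and> enat j \<le> enat (n - 1)" for j using that lt by auto
    show "\<not> P (Suc k)" if "enat (n - 1) = enat k" for k using that n n2 by auto
    show "is_greatest {k. 1 \<le> k \<and> (\<forall>j. 1 \<le> j \<and> enat j \<le> k \<longrightarrow> P j)} (enat (n - 1))"
      unfolding is_greatest_def
    proof (intro conjI ballI)
      show "enat (n - 1) \<in> {k. 1 \<le> k \<and> (\<forall>j. 1 \<le> j \<and> enat j \<le> k \<longrightarrow> P j)}"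
        using n2 lt by (auto simp: one_enat_def)
      fix k' assume k': "k' \<in> {k. 1 \<le> k \<and> (\<forall>j. 1 \<le> j \<and> enat j \<le> k \<longrightarrow> P j)}"
      show "k' \<le> enat (n - 1)"
      proof (rule ccontr)
        assume "\<not> k' \<le> enat (n - 1)"
        then have "enat n \<le> k'" using n2 by (cases k') auto
        then have "P n" using k' n by auto
        with n show False by simp
      qed
    qed
  qed
qed

lemma greatest2:
  fixes Q :: "nat \<Rightarrow> bool"
  shows "\<exists>K. is_greatest {k. 2 \<le> k \<and> (\<forall>j::nat. 2 \<le> j \<and> enat j \<le> k - 1 \<longrightarrow> Q j)} K \<and> 2 \<le> K
    \<and> (\<forall>j. 2 \<le> j \<and> enat (Suc j) \<le> K \<longrightarrow> Q j) \<and> (\<forall>k. K = enat k \<longrightarrow> \<not> Q k)"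
proof (cases "\<forall>j. 2 \<le> j \<longrightarrow> Q j")
  case True
  then show ?thesis by (intro exI[of _ \<infinity>]) (auto simp: is_greatest_def)
next
  case False
  define n where "n = (LEAST j. 2 \<le> j \<and> \<not> Q j)"
  have n: "2 \<le> n" "\<not> Q n" using LeastI_ex[of "\<lambda>j. 2 \<le> j \<and> \<not> Q j"] False unfolding n_def by auto
  have lt: "\<And>j. 2 \<le> j \<Longrightarrow> j < n \<Longrightarrow> Q j" using not_less_Least[of _ "\<lambda>j. 2 \<le> j \<and> \<not> Q j"] unfolding n_def by blast
  have m1: "enat n - 1 = enat (n - 1)" by (simp add: one_enat_def)
  show ?thesis
  proof (intro exI[of _ "enat n"] conjI allI impI)
    show "2 \<le> enat n" using n by (simp add: numeral_eq_enat)
    show "Q j" if "2 \<le> j \<and> enat (Suc j) \<le> enat n" for j using that lt by auto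
    show "\<not> Q k" if "enat n = enat k" for k using that n by auto
    show "is_greatest {k. 2 \<le> k \<and> (\<forall>j. 2 \<le> j \<and> enat j \<le> k - 1 \<longrightarrow> Q j)} (enat n)"
      unfolding is_greatest_def
    proof (intro conjI ballI)
      show "enat n \<in> {k. 2 \<le> k \<and> (\<forall>j. 2 \<le> j \<and> enat j \<le> k - 1 \<longrightarrow> Q j)}"
        using n lt by (auto simp: m1 numeral_eq_enat)
      fix k' assume k': "k' \<in> {k. 2 \<le> k \<and> (\<forall>j. 2 \<le> j \<and> enat j \<le> k - 1 \<longrightarrow> Q j)}"
      show "k' \<le> enat n"
      proof (rule ccontr)
        assume "\<not> k' \<le> enat n"
        then have "enat n \<le> k' - 1" by (cases k') (auto simp: one_enat_def)
        then have "Q n" using k' n by auto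
        with n show False by simp
      qed
    qed
  qed
qed


definition pw :: "complex \<Rightarrow> nat \<Rightarrow> real \<Rightarrow> complex" where
  "pw z j = (\<lambda>t. 1 / (complex_of_real t - z)^j)"

context side begin

lemma pw_meas[measurable]: "pw z j \<in> borel_measurable M"
  unfolding pw_def by measurable

lemma pw_shift: "complex_of_real t \<noteq> z \<Longrightarrow> (complex_of_real t - z) * pw z (Suc j) t = pw z j t"
  by (simp add: pw_def field_simps)

lemma pw_t: "complex_of_real t \<noteq> z \<Longrightarrow> complex_of_real t * pw z (Suc j) t = pw z j t + z * pw z (Suc j) t"
proof -
  assume a: "complex_of_real t \<noteq> z"
  have "complex_of_real t * pw z (Suc j) t = (complex_of_real t - z) * pw z (Suc j) t + z * pw z (Suc j) t"
    by (simp add: algebra_simps)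
  then show ?thesis using pw_shift[OF a] by simp
qed

lemma pw0: "pw z 0 t = 1" by (simp add: pw_def)

context
  fixes z assumes Z0: "emeasure M {t. complex_of_real t = z} = 0"
begin

lemma L2_tpw: assumes "j \<noteq> 0 \<Longrightarrow> L2 M (pw z j)" "L2 M (pw z (Suc j))"
  shows "L2 M (\<lambda>t. complex_of_real t * pw z (Suc j) t - (if j = 0 then 1 else 0))"
proof (rule L2_cong)
  show "L2 M (\<lambda>t. (if j = 0 then 0 else pw z j t) + z * pw z (Suc j) t)"
    using assms by (cases "j = 0") (auto intro!: L2_add L2_scale simp: L2_zero)
  show "(\<lambda>t. complex_of_real t * pw z (Suc j) t - (if j = 0 then 1 else 0)) \<in> borel_measurable M" by measurable
  show "AE t in M. complex_of_real t * pw z (Suc j) t - (if j = 0 then 1 else 0) = (if j = 0 then 0 else pw z j t) + z * pw z (Suc j) t"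
    using AE_notZ[OF Z0] by eventually_elim (simp add: pw_t pw0)
qed

lemma sok_pw: assumes "j \<noteq> 0 \<Longrightarrow> L2 M (pw z j)" "L2 M (pw z (Suc j))"
  shows "sok M z (pw z (Suc j)) (if j = 0 then (\<lambda>t. 0) else pw z j) (if j = 0 then 1 else 0)"
  unfolding sok_def
proof (intro conjI)
  show "L2 M (pw z (Suc j))" by fact
  show "L2 M (\<lambda>t. complex_of_real t * pw z (Suc j) t - (if j = 0 then 1 else 0))" by (rule L2_tpw[OF assms])
  show "AE t in M. (complex_of_real t - z) * pw z (Suc j) t - (if j = 0 then 1 else 0) = (if j = 0 then (\<lambda>t. 0) else pw z j) t"
    using AE_notZ[OF Z0] by eventually_elim (simp add: pw_shift pw0)
qed

lemma int_pw: assumes "j \<noteq> 0 \<Longrightarrow> L2 M (pw z j)" "L2 M (pw z (Suc j))" shows "integrable M (pw z (Suc j))"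
  using sok_int[OF sok_pw[OF assms]] .

lemma eig_form: assumes "sok M z f (\<lambda>t. 0) c" shows "AE t in M. f t = c * pw z 1 t"
  using sok_off[OF assms] AE_notZ[OF Z0] by eventually_elim (simp add: pw_def)

lemma next_form: assumes "sok M z f (pw z k) c" shows "AE t in M. f t = pw z (Suc k) t + c * pw z 1 t"
  using sok_off[OF assms] AE_notZ[OF Z0]
proof eventually_elim
  case (elim t)
  then have "f t = pw z k t / (complex_of_real t - z) + c / (complex_of_real t - z)"
    by (simp add: add_divide_distrib)
  moreover have "pw z k t / (complex_of_real t - z) = pw z (Suc k) t" by (simp add: pw_def)
  moreover have "c / (complex_of_real t - z) = c * pw z 1 t" by (simp add: pw_def)
  ultimately show ?case by simp
qed

lemma pw_not_null: "\<not> (AE t in M. pw z j t = 0)"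
proof
  assume "AE t in M. pw z j t = 0"
  with AE_notZ[OF Z0] have "AE t in M. False" by eventually_elim (simp add: pw_def)
  then show False by (rule AE_False_imp)
qed

end
end


context two begin

lemma two_self: "two Mp Mm A"
  by (rule two_axioms)

lemma part3:
  assumes z: "z \<in> Ar Mp \<inter> Ar Mm"
  defines "P \<equiv> (\<lambda>j::nat. (\<integral>\<^sup>+ t. ennreal (1 / (cmod (complex_of_real t - z))^(2*j)) \<partial>Mp) < \<infinity>
                \<and> (\<integral>\<^sup>+ t. ennreal (1 / (cmod (complex_of_real t - z))^(2*j)) \<partial>Mm) < \<infinity>
                \<and> (\<integral> t. 1 / (complex_of_real t - z)^j \<partial>Mm)
                  = (\<integral> t. 1 / (complex_of_real t - z)^j \<partial>Mp))"
  shows "(z \<in> op_sigma_p Mp Mm A \<longleftrightarrow>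
          (\<integral> t. 1 / (complex_of_real t - z) \<partial>Mp) = (\<integral> t. 1 / (complex_of_real t - z) \<partial>Mm))
     \<and> (z \<in> op_sigma_p Mp Mm A \<longrightarrow>
          geom_mult Mp Mm A z = 1
        \<and> is_greatest {k. 1 \<le> k \<and> (\<forall>j::nat. 1 \<le> j \<and> enat j \<le> k \<longrightarrow> P j)} (alg_mult Mp Mm A z))"
proof -
  have Zp: "emeasure Mp {t. complex_of_real t = z} = 0" and Zm: "emeasure Mm {t. complex_of_real t = z} = 0"
    using z P.sigp N.sigp by (auto simp: Ar_def)
  have PL: "L2 Mp (pw z j) \<and> L2 Mm (pw z j) \<and> integral\<^sup>L Mm (pw z j) = integral\<^sup>L Mp (pw z j)" if "P j" for j
    using that unfolding P_def pw_def by (simp add: P.L2_pow_iff N.L2_pow_iff)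
  have L1: "L2 Mp (pw z 1)" "L2 Mm (pw z 1)"
    using z P.L2_pow_iff[of z 1] N.L2_pow_iff[of z 1] by (auto simp: Ar_def pw_def)
  have ip1: "integrable Mp (pw z 1)" "integrable Mm (pw z 1)"
    using P.int_pw[OF Zp, of 0] N.int_pw[OF Zm, of 0] L1 by simp_all
  have I1conv: "(\<integral> t. 1 / (complex_of_real t - z) \<partial>M) = integral\<^sup>L M (pw z 1)" for M
    by (simp add: pw_def)
  have dir1: "integral\<^sup>L Mp (pw z 1) = integral\<^sup>L Mm (pw z 1)" if e: "z \<in> op_sigma_p Mp Mm A"
  proof -
    from e obtain v where v: "v \<in> R z 1" "\<not> vn v" unfolding op_sigma_p_def mem_Collect_eq by blast
    from v(1) have "Dc z vzero v" using R_1 by blast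
    then obtain c where c: "sok Mp z (fst v) (\<lambda>t. 0) c" "sok Mm z (snd v) (\<lambda>t. 0) c"
      "integral\<^sup>L Mp (fst v) = integral\<^sup>L Mm (snd v)" by (auto simp: Dc_def vzero_def)
    have ae: "AE t in Mp. fst v t = c * pw z 1 t" "AE t in Mm. snd v t = c * pw z 1 t"
      using P.eig_form[OF Zp c(1)] N.eig_form[OF Zm c(2)] .
    have c0: "c \<noteq> 0"
    proof
      assume "c = 0"
      then have "AE t in Mp. fst v t = 0" "AE t in Mm. snd v t = 0" using ae by auto
      with v(2) show False by (simp add: vnull_def nullf_def)
    qed
    have mv: "fst v \<in> borel_measurable Mp" "snd v \<in> borel_measurable Mm"
      using c by (auto simp: sok_def L2_def)
    have "integral\<^sup>L Mp (fst v) = c * integral\<^sup>L Mp (pw z 1)"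
      by (subst integral_cong_AE[OF mv(1) _ ae(1)]) simp_all
    moreover have "integral\<^sup>L Mm (snd v) = c * integral\<^sup>L Mm (pw z 1)"
      by (subst integral_cong_AE[OF mv(2) _ ae(2)]) simp_all
    ultimately show ?thesis using c(3) c0 by simp
  qed
  define e where "e j = (pw z j, pw z j)" for j
  define S where "S = {k. 1 \<le> k \<and> (\<forall>j::nat. 1 \<le> j \<and> enat j \<le> k \<longrightarrow> P j)}"
  have main: "\<exists>K. chain Mp Mm A z e K \<and> is_greatest S K"
    if I1: "integral\<^sup>L Mp (pw z 1) = integral\<^sup>L Mm (pw z 1)"
  proof -
    have P1: "P 1" unfolding P_def using z I1 by (auto simp: Ar_def pw_def)
    obtain K where K: "is_greatest S K" "1 \<le> K" "\<And>j. 1 \<le> j \<Longrightarrow> enat j \<le> K \<Longrightarrow> P j"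
      "\<And>k. K = enat k \<Longrightarrow> \<not> P (Suc k)"
      using greatest1[of P, OF P1] unfolding S_def by blast
    have "chain Mp Mm A z e K"
    proof (rule chain.intro[OF two_self], rule chain_axioms.intro)
      show "1 \<le> K" by (fact K(2))
      show "Dc z vzero (e 1)"
        unfolding Dc_def e_def vzero_def fst_conv snd_conv
        using P.sok_pw[OF Zp, of 0] N.sok_pw[OF Zm, of 0] L1 I1 by (intro exI[of _ 1]) simp
      show "\<not> vn (e 1)" using P.pw_not_null[OF Zp] by (simp add: e_def vnull_def nullf_def)
      show "\<exists>\<alpha>. veq v (vcomb {1} (\<lambda>_. \<alpha>) e)" if "Dc z vzero v" for v
      proof -
        from that obtain c where c: "sok Mp z (fst v) (\<lambda>t. 0) c" "sok Mm z (snd v) (\<lambda>t. 0) c"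
          by (auto simp: Dc_def vzero_def)
        have "AE t in Mp. fst v t = c * pw z 1 t" "AE t in Mm. snd v t = c * pw z 1 t"
          using P.eig_form[OF Zp c(1)] N.eig_form[OF Zm c(2)] .
        then have "veq v (vcomb {1} (\<lambda>_. c) e)"
          by (auto simp: vnull_def nullf_def vsub_def vcomb_def e_def elim!: eventually_mono)
        then show ?thesis by blast
      qed
      show "Dc z (e j) (e (Suc j))" if j: "1 \<le> j" "enat (Suc j) \<le> K" for j
      proof -
        have "enat j \<le> K" using j(2) by (meson Suc_ile_eq order_less_imp_le)
        then have Pj: "P j" "P (Suc j)" using K(3) j by auto
        show ?thesis
          unfolding Dc_def e_def fst_conv snd_conv
          using P.sok_pw[OF Zp, of j] N.sok_pw[OF Zm, of j] PL[OF Pj(1)] PL[OF Pj(2)] j(1)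
          by (intro exI[of _ 0]) simp
      qed
      show "\<not> Dc z (e k) x" if k: "K = enat k" for k x
      proof
        assume "Dc z (e k) x"
        then obtain c where c: "sok Mp z (fst x) (pw z k) c" "sok Mm z (snd x) (pw z k) c"
          "integral\<^sup>L Mp (fst x) = integral\<^sup>L Mm (snd x)" by (auto simp: Dc_def e_def)
        have ae: "AE t in Mp. fst x t = pw z (Suc k) t + c * pw z 1 t" "AE t in Mm. snd x t = pw z (Suc k) t + c * pw z 1 t"
          using P.next_form[OF Zp c(1)] N.next_form[OF Zm c(2)] .
        have Lx: "L2 Mp (fst x)" "L2 Mm (snd x)" using c by (auto simp: sok_def)
        have ix: "integrable Mp (fst x)" "integrable Mm (snd x)" using P.sok_int[OF c(1)] N.sok_int[OF c(2)] .
        have Ls: "L2 Mp (pw z (Suc k))"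
          by (rule P.L2_cong[OF P.L2_diff[OF Lx(1) P.L2_scale[OF L1(1), of c]]]) (simp, use ae(1) in \<open>auto elim: eventually_mono\<close>)
        have Lsm: "L2 Mm (pw z (Suc k))"
          by (rule N.L2_cong[OF N.L2_diff[OF Lx(2) N.L2_scale[OF L1(2), of c]]]) (simp, use ae(2) in \<open>auto elim: eventually_mono\<close>)
        have mx: "fst x \<in> borel_measurable Mp" "snd x \<in> borel_measurable Mm" using Lx by (auto simp: L2_def)
        have "integral\<^sup>L Mp (pw z (Suc k)) = (\<integral> t. fst x t - c * pw z 1 t \<partial>Mp)"
          by (rule integral_cong_AE) (use mx ae(1) in \<open>auto elim: eventually_mono\<close>)
        also have "\<dots> = integral\<^sup>L Mp (fst x) - c * integral\<^sup>L Mp (pw z 1)" using ix ip1 by simp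
        finally have ip: "integral\<^sup>L Mp (pw z (Suc k)) = integral\<^sup>L Mp (fst x) - c * integral\<^sup>L Mp (pw z 1)" .
        have "integral\<^sup>L Mm (pw z (Suc k)) = (\<integral> t. snd x t - c * pw z 1 t \<partial>Mm)"
          by (rule integral_cong_AE) (use mx ae(2) in \<open>auto elim: eventually_mono\<close>)
        also have "\<dots> = integral\<^sup>L Mm (snd x) - c * integral\<^sup>L Mm (pw z 1)" using ix ip1 by simp
        finally have im: "integral\<^sup>L Mm (pw z (Suc k)) = integral\<^sup>L Mm (snd x) - c * integral\<^sup>L Mm (pw z 1)" .
        have ieq: "integral\<^sup>L Mm (pw z (Suc k)) = integral\<^sup>L Mp (pw z (Suc k))" using ip im c(3) I1 by simp
        have "P (Suc k)" unfolding P_def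
        proof (intro conjI)
          show "(\<integral>\<^sup>+ t. ennreal (1 / (cmod (complex_of_real t - z))^(2*Suc k)) \<partial>Mp) < \<infinity>"
            using Ls unfolding pw_def P.L2_pow_iff .
          show "(\<integral>\<^sup>+ t. ennreal (1 / (cmod (complex_of_real t - z))^(2*Suc k)) \<partial>Mm) < \<infinity>"
            using Lsm unfolding pw_def N.L2_pow_iff .
          show "(\<integral> t. 1 / (complex_of_real t - z)^(Suc k) \<partial>Mm) = (\<integral> t. 1 / (complex_of_real t - z)^(Suc k) \<partial>Mp)"
            using ieq unfolding pw_def .
        qed
        with K(4)[OF k] show False by simp
      qed
    qed
    with K(1) show ?thesis by blast
  qed
  have I1c: "(\<integral> t. 1 / (complex_of_real t - z) \<partial>Mp) = (\<integral> t. 1 / (complex_of_real t - z) \<partial>Mm)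
      \<longleftrightarrow> integral\<^sup>L Mp (pw z 1) = integral\<^sup>L Mm (pw z 1)" by (simp add: I1conv)
  show ?thesis unfolding S_def[symmetric] I1c
  proof (intro conjI impI iffI)
    show "z \<in> op_sigma_p Mp Mm A \<Longrightarrow> integral\<^sup>L Mp (pw z 1) = integral\<^sup>L Mm (pw z 1)" by (rule dir1)
    assume I1: "integral\<^sup>L Mp (pw z 1) = integral\<^sup>L Mm (pw z 1)"
    from main[OF I1] obtain K where "chain Mp Mm A z e K" by blast
    then show "z \<in> op_sigma_p Mp Mm A" by (rule chain.eig)
  next
    assume "z \<in> op_sigma_p Mp Mm A"
    from main[OF dir1[OF this]] obtain K where K: "chain Mp Mm A z e K" "is_greatest S K" by blast
    show "geom_mult Mp Mm A z = 1" using chain.geom[OF K(1)] .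
    show "is_greatest S (alg_mult Mp Mm A z)" using chain.alg[OF K(1)] K(2) by simp
  qed
qed

end


definition dl :: "real \<Rightarrow> real \<Rightarrow> complex" where
  "dl r = (\<lambda>t. complex_of_real (indicator {r} t))"

definition Ef :: "complex \<Rightarrow> real \<Rightarrow> complex \<Rightarrow> nat \<Rightarrow> real \<Rightarrow> complex" where
  "Ef z r q j = (\<lambda>t. - pw z j t + q * dl r t)"

lemma dl_r[simp]: "dl r r = 1" by (simp add: dl_def)
lemma dl_nr[simp]: "t \<noteq> r \<Longrightarrow> dl r t = 0" by (simp add: dl_def)

context side begin

lemma dl_meas[measurable]: "dl r \<in> borel_measurable M"
  unfolding dl_def by (simp add: sets_M)

context
  fixes r z assumes zr: "z = complex_of_real r" and atom: "emeasure M {r} \<noteq> 0"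
begin

lemma m_pos: "measure M {r} > 0"
  using atom atom_fin[of r] by (simp add: measure_def enn2real_positive_iff less_top zero_less_iff_neq_zero)

lemma int_dl: "integrable M (dl r)"
proof -
  have "integrable M (indicator {r} :: real \<Rightarrow> real)"
    using atom_fin[of r] by (simp add: sets_M less_top)
  then show ?thesis unfolding dl_def by simp
qed

lemma integral_dl: "integral\<^sup>L M (dl r) = complex_of_real (measure M {r})"
  unfolding dl_def by (simp add: sets_M)

lemma L2_dl: "L2 M (dl r)"
proof -
  have "integrable M (indicator {r} :: real \<Rightarrow> real)"
    using atom_fin[of r] by (simp add: sets_M less_top)
  moreover have "(\<lambda>t. (cmod (dl r t))^2) = (indicator {r} :: real \<Rightarrow> real)"
    by (auto simp: dl_def fun_eq_iff split: split_indicator)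
  ultimately show ?thesis by (simp add: L2_def)
qed

lemma t_dl: "complex_of_real t * dl r t = complex_of_real r * dl r t"
  by (cases "t = r") simp_all

lemma pw_r: "1 \<le> j \<Longrightarrow> pw z j r = 0"
  by (simp add: pw_def zr)

lemma ne_iff: "complex_of_real t \<noteq> z \<longleftrightarrow> t \<noteq> r"
  using zr by auto

lemma pw_t_all: "1 \<le> j \<Longrightarrow> complex_of_real t * pw z (Suc j) t = pw z j t + z * pw z (Suc j) t"
  by (cases "t = r") (simp_all add: pw_t ne_iff pw_r)

lemma pw_t1_all: "complex_of_real t * pw z 1 t - 1 = z * pw z 1 t - dl r t"
proof (cases "t = r")
  case True then show ?thesis by (simp add: pw_r)
next
  case False
  then have "complex_of_real t * pw z (Suc 0) t = pw z 0 t + z * pw z (Suc 0) t"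
    by (intro pw_t) (simp add: ne_iff)
  then show ?thesis using False by (simp add: pw0)
qed

lemma int_pw2: assumes "L2 M (pw z (Suc j))" "j \<noteq> 0 \<Longrightarrow> L2 M (pw z j)"
  shows "integrable M (pw z (Suc j))"
proof (cases "j = 0")
  case True
  have e: "(\<lambda>t. complex_of_real t * pw z (Suc j) t - 1) = (\<lambda>t. z * pw z (Suc j) t - dl r t)"
    using True pw_t1_all by simp
  have "L2 M (\<lambda>t. complex_of_real t * pw z (Suc j) t - 1)"
    unfolding e using L2_diff[OF L2_scale[OF assms(1), of z] L2_dl] .
  then show ?thesis using N1[OF assms(1)] by blast
next
  case False
  have "L2 M (\<lambda>t. complex_of_real t * pw z (Suc j) t - 0)"
    using L2_add[OF assms(2)[OF False] L2_scale[OF assms(1), of z]] False by (simp add: pw_t_all)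
  then show ?thesis using N1[OF assms(1)] by blast
qed

lemma eig2: assumes "sok M z f (\<lambda>t. 0) c"
  shows "c = 0 \<and> (AE t in M. f t = f r * dl r t)"
proof -
  have c: "c = 0" using sok_atom[OF atom zr assms] by simp
  have "AE t in M. f t = f r * dl r t"
    using sok_off[OF assms]
  proof eventually_elim
    case (elim t) then show ?case by (cases "t = r") (simp_all add: ne_iff c)
  qed
  with c show ?thesis by simp
qed

lemma int_atomic: assumes "f \<in> borel_measurable M" "AE t in M. f t = a * dl r t"
  shows "integral\<^sup>L M f = a * complex_of_real (measure M {r})"
proof -
  have "integral\<^sup>L M f = (\<integral> t. a * dl r t \<partial>M)" by (rule integral_cong_AE) (use assms in auto)
  also have "\<dots> = a * complex_of_real (measure M {r})" using integral_dl by simp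
  finally show ?thesis .
qed

lemma off2: assumes "sok M z f g c"
  shows "AE t in M. t \<noteq> r \<longrightarrow> f t = (g t + c) * pw z 1 t"
  using sok_off[OF assms] by eventually_elim (auto simp: ne_iff pw_def)

lemma sok_dl: "sok M z (\<lambda>t. a * dl r t) (\<lambda>t. 0) 0"
  unfolding sok_def
proof (intro conjI)
  show "L2 M (\<lambda>t. a * dl r t)" by (rule L2_scale[OF L2_dl])
  show "L2 M (\<lambda>t. complex_of_real t * (a * dl r t) - 0)"
  proof -
    have "(\<lambda>t. complex_of_real t * (a * dl r t) - 0) = (\<lambda>t. (a * complex_of_real r) * dl r t)"
    proof
      fix t show "complex_of_real t * (a * dl r t) - 0 = (a * complex_of_real r) * dl r t"
        by (cases "t = r") simp_all
    qed
    then show ?thesis using L2_scale[OF L2_dl, of "a * complex_of_real r"] by simp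
  qed
  show "AE t in M. (complex_of_real t - z) * (a * dl r t) - 0 = 0"
  proof (rule AE_I2)
    fix t show "(complex_of_real t - z) * (a * dl r t) - 0 = 0" by (cases "t = r") (simp_all add: zr)
  qed
qed

lemma sokE1: assumes "L2 M (pw z 1)" shows "sok M z (Ef z r q 1) (dl r) (-1)"
  unfolding sok_def Ef_def
proof (intro conjI)
  show "L2 M (\<lambda>t. - pw z 1 t + q * dl r t)" by (intro L2_add L2_uminus L2_scale assms L2_dl)
  have "L2 M (\<lambda>t. dl r t - z * pw z 1 t + (q * complex_of_real r) * dl r t)"
    by (intro L2_add L2_diff L2_scale assms L2_dl)
  moreover have "(\<lambda>t. dl r t - z * pw z 1 t + (q * complex_of_real r) * dl r t)
      = (\<lambda>t. complex_of_real t * (- pw z 1 t + q * dl r t) - - 1)"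
  proof
    fix t
    show "dl r t - z * pw z 1 t + (q * complex_of_real r) * dl r t = complex_of_real t * (- pw z 1 t + q * dl r t) - - 1"
    proof (cases "t = r")
      case True then show ?thesis by (simp add: pw_r)
    next
      case False
      have "complex_of_real t * pw z (Suc 0) t = pw z 0 t + z * pw z (Suc 0) t"
        by (intro pw_t) (simp add: ne_iff False)
      then show ?thesis using False by (simp add: pw0 algebra_simps)
    qed
  qed
  ultimately show "L2 M (\<lambda>t. complex_of_real t * (- pw z 1 t + q * dl r t) - - 1)" by simp
  show "AE t in M. (complex_of_real t - z) * (- pw z 1 t + q * dl r t) - - 1 = dl r t"
  proof (rule AE_I2)
    fix t show "(complex_of_real t - z) * (- pw z 1 t + q * dl r t) - - 1 = dl r t"
    proof (cases "t = r")
      case True then show ?thesis by (simp add: zr)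
    next
      case False
      then have "(complex_of_real t - z) * pw z (Suc 0) t = pw z 0 t" by (intro pw_shift) (simp add: ne_iff)
      then show ?thesis using False by (simp add: algebra_simps pw0)
    qed
  qed
qed

lemma sokE2: assumes "1 \<le> i" "L2 M (pw z i)" "L2 M (pw z (Suc i))"
  shows "sok M z (Ef z r q (Suc i)) (Ef z r 0 i) 0"
  unfolding sok_def Ef_def
proof (intro conjI)
  show "L2 M (\<lambda>t. - pw z (Suc i) t + q * dl r t)" by (intro L2_add L2_uminus L2_scale assms L2_dl)
  have "L2 M (\<lambda>t. - pw z i t - z * pw z (Suc i) t + (q * complex_of_real r) * dl r t)"
    by (intro L2_add L2_diff L2_uminus L2_scale assms L2_dl)
  moreover have "(\<lambda>t. - pw z i t - z * pw z (Suc i) t + (q * complex_of_real r) * dl r t)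
      = (\<lambda>t. complex_of_real t * (- pw z (Suc i) t + q * dl r t) - 0)"
  proof
    fix t
    show "- pw z i t - z * pw z (Suc i) t + (q * complex_of_real r) * dl r t = complex_of_real t * (- pw z (Suc i) t + q * dl r t) - 0"
    proof (cases "t = r")
      case True then show ?thesis using pw_r[OF assms(1)] pw_r[of "Suc i"] by simp
    next
      case False
      then show ?thesis using pw_t_all[OF assms(1), of t] by (simp add: algebra_simps)
    qed
  qed
  ultimately show "L2 M (\<lambda>t. complex_of_real t * (- pw z (Suc i) t + q * dl r t) - 0)" by simp
  show "AE t in M. (complex_of_real t - z) * (- pw z (Suc i) t + q * dl r t) - 0 = - pw z i t + 0 * dl r t"
  proof (rule AE_I2)
    fix t show "(complex_of_real t - z) * (- pw z (Suc i) t + q * dl r t) - 0 = - pw z i t + 0 * dl r t"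
    proof (cases "t = r")
      case True then show ?thesis using pw_r[OF assms(1)] by (simp add: zr)
    next
      case False
      then have "(complex_of_real t - z) * pw z (Suc i) t = pw z i t" by (intro pw_shift) (simp add: ne_iff)
      then show ?thesis using False by (simp add: algebra_simps)
    qed
  qed
qed

lemma intE: assumes "integrable M (pw z j)"
  shows "integral\<^sup>L M (Ef z r q j) = - integral\<^sup>L M (pw z j) + q * complex_of_real (measure M {r})"
  unfolding Ef_def using assms int_dl integral_dl by simp

end
end


lemma pw_mult: "pw z i t * pw z 1 t = pw z (Suc i) t" by (simp add: pw_def)

context two begin

lemma part2:
  assumes z: "z \<in> Ap Mp \<inter> Ap Mm"
  defines "C3 \<equiv> emeasure Mm {t. complex_of_real t = z} = emeasure Mp {t. complex_of_real t = z}
             \<and> (\<integral>\<^sup>+ t. indicator {t. complex_of_real t \<noteq> z} t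
                    * ennreal (1 / (cmod (complex_of_real t - z))^2) \<partial>Mp) < \<infinity>
             \<and> (\<integral>\<^sup>+ t. indicator {t. complex_of_real t \<noteq> z} t
                    * ennreal (1 / (cmod (complex_of_real t - z))^2) \<partial>Mm) < \<infinity>"
    and "Q \<equiv> (\<lambda>j::nat. (\<integral>\<^sup>+ t. indicator {t. complex_of_real t \<noteq> z} t
                      * ennreal (1 / (cmod (complex_of_real t - z))^(2*j)) \<partial>Mp) < \<infinity>
                \<and> (\<integral>\<^sup>+ t. indicator {t. complex_of_real t \<noteq> z} t
                      * ennreal (1 / (cmod (complex_of_real t - z))^(2*j)) \<partial>Mm) < \<infinity>
                \<and> set_lebesgue_integral Mm {t. complex_of_real t \<noteq> z}
                      (\<lambda>t. 1 / (complex_of_real t - z)^(j-1))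
                  = set_lebesgue_integral Mp {t. complex_of_real t \<noteq> z}
                      (\<lambda>t. 1 / (complex_of_real t - z)^(j-1)))"
  shows "(z \<in> op_sigma_p Mp Mm A \<and> geom_mult Mp Mm A z = 1)
     \<and> (simple_eig Mp Mm A z \<longleftrightarrow> \<not> C3)
     \<and> (C3 \<longrightarrow> is_greatest {k. 2 \<le> k \<and> (\<forall>j::nat. 2 \<le> j \<and> enat j \<le> k - 1 \<longrightarrow> Q j)} (alg_mult Mp Mm A z))"
proof -
  have Zp: "emeasure Mp {t. complex_of_real t = z} \<noteq> 0" and Zm: "emeasure Mm {t. complex_of_real t = z} \<noteq> 0"
    using z P.sigp N.sigp by (auto simp: Ap_def)
  define r where "r = Re z"
  have zr: "z = complex_of_real r" and Zpr: "{t. complex_of_real t = z} = {r}"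
    using P.atomZ[OF Zp] by (auto simp: r_def)
  have ap: "emeasure Mp {r} \<noteq> 0" and am: "emeasure Mm {r} \<noteq> 0" using Zp Zm Zpr by auto
  define mp where "mp = measure Mp {r}"
  define mm where "mm = measure Mm {r}"
  have mp0: "mp > 0" and mm0: "mm > 0" using P.m_pos[OF zr ap] N.m_pos[OF zr am] by (simp_all add: mp_def mm_def)
  have emp: "emeasure Mp {r} = ennreal mp" and emm: "emeasure Mm {r} = ennreal mm"
    unfolding mp_def mm_def using P.atom_fin N.atom_fin by (simp_all add: emeasure_eq_ennreal_measure less_top)
  have nn1: "(\<integral>\<^sup>+ t. indicator {t. complex_of_real t \<noteq> z} t * ennreal (1 / (cmod (complex_of_real t - z))^2) \<partial>M) < \<infinity>
     \<longleftrightarrow> L2 M (pw z 1)" if "side M" for M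
  proof -
    interpret side M by fact
    show ?thesis using nn_ind[of 1 z] L2_pow_iff[of z 1] by (simp add: pw_def)
  qed
  have C3iff: "C3 \<longleftrightarrow> mp = mm \<and> L2 Mp (pw z 1) \<and> L2 Mm (pw z 1)"
    unfolding C3_def Zpr emp emm using nn1[OF P.side_axioms] nn1[OF N.side_axioms] mp0 mm0
    by auto
  have Qiff: "Q j \<longleftrightarrow> L2 Mp (pw z j) \<and> L2 Mm (pw z j) \<and> integral\<^sup>L Mm (pw z (j - 1)) = integral\<^sup>L Mp (pw z (j - 1))"
    if "2 \<le> j" for j
  proof -
    have "1 \<le> j" "1 \<le> j - 1" using that by auto
    then show ?thesis unfolding Q_def
      using P.nn_ind[of j z] N.nn_ind[of j z] P.L2_pow_iff[of z j] N.L2_pow_iff[of z j]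
        P.set_int_ind[of "j - 1" z] N.set_int_ind[of "j - 1" z] by (simp add: pw_def)
  qed
  have eig2p: "c = 0 \<and> (AE t in Mp. f t = f r * dl r t)" if "sok Mp z f (\<lambda>t. 0) c" for f c
    using P.eig2[OF zr ap that] .
  have eig2m: "c = 0 \<and> (AE t in Mm. f t = f r * dl r t)" if "sok Mm z f (\<lambda>t. 0) c" for f c
    using N.eig2[OF zr am that] .
  have intp: "integral\<^sup>L Mp f = a * complex_of_real mp" if "f \<in> borel_measurable Mp" "AE t in Mp. f t = a * dl r t" for f a
    using P.int_atomic[OF zr ap that] by (simp add: mp_def)
  have intm: "integral\<^sup>L Mm f = a * complex_of_real mm" if "f \<in> borel_measurable Mm" "AE t in Mm. f t = a * dl r t" for f a
    using N.int_atomic[OF zr am that] by (simp add: mm_def)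
  have sokmeas: "f \<in> borel_measurable M" if "sok M z f g c" for M f g c
    using that by (simp add: sok_def L2_def)
  have eigv: "\<exists>a b. (AE t in Mp. fst v t = a * dl r t) \<and> (AE t in Mm. snd v t = b * dl r t) \<and> a * complex_of_real mp = b * complex_of_real mm"
    if "Dc z vzero v" for v
  proof -
    from that obtain c where c: "sok Mp z (fst v) (\<lambda>t. 0) c" "sok Mm z (snd v) (\<lambda>t. 0) c"
      "integral\<^sup>L Mp (fst v) = integral\<^sup>L Mm (snd v)" by (auto simp: Dc_def vzero_def)
    from eig2p[OF c(1)] eig2m[OF c(2)] have ae: "AE t in Mp. fst v t = fst v r * dl r t" "AE t in Mm. snd v t = snd v r * dl r t" by auto
    have "fst v r * complex_of_real mp = snd v r * complex_of_real mm"
      using intp[OF sokmeas[OF c(1)] ae(1)] intm[OF sokmeas[OF c(2)] ae(2)] c(3) by simp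
    with ae show ?thesis by blast
  qed
  have not_null_dl: "\<not> vn ((\<lambda>t. a * dl r t), g)" if "a \<noteq> 0" for a g
  proof
    assume "vn ((\<lambda>t. a * dl r t), g)"
    then have "AE t in Mp. a * dl r t = 0" by (simp add: vnull_def nullf_def)
    from P.AE_atom[OF ap this] that show False by simp
  qed
  show ?thesis
  proof (cases C3)
    case False
    define e where "e j = ((\<lambda>t. complex_of_real (1 / mp) * dl r t), (\<lambda>t. complex_of_real (1 / mm) * dl r t))" for j :: nat
    have ch: "chain Mp Mm A z e 1"
    proof (rule chain.intro[OF two_axioms], rule chain_axioms.intro)
      show "1 \<le> (1::enat)" by simp
      show "Dc z vzero (e 1)"
        unfolding Dc_def e_def vzero_def fst_conv snd_conv
        using P.sok_dl[OF zr ap, of "complex_of_real (1 / mp)"] N.sok_dl[OF zr am, of "complex_of_real (1 / mm)"]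
          P.integral_dl[OF zr ap] N.integral_dl[OF zr am] mp0 mm0
        by (intro exI[of _ 0]) (simp add: mp_def mm_def)
      show "\<not> vn (e 1)" unfolding e_def by (rule not_null_dl) (use mp0 in simp)
      show "\<exists>\<alpha>. veq v (vcomb {1} (\<lambda>_. \<alpha>) e)" if "Dc z vzero v" for v
      proof -
        from eigv[OF that] obtain a b where ab: "AE t in Mp. fst v t = a * dl r t" "AE t in Mm. snd v t = b * dl r t"
          "a * complex_of_real mp = b * complex_of_real mm" by blast
        have b: "b = a * complex_of_real mp * complex_of_real (1 / mm)" using ab(3) mm0 by (simp add: field_simps)
        have a: "a = a * complex_of_real mp * complex_of_real (1 / mp)" using mp0 by (simp add: field_simps)
        have "AE t in Mp. fst v t - (a * complex_of_real mp) * (complex_of_real (1 / mp) * dl r t) = 0"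
          using ab(1) by eventually_elim (subst (asm) a, simp add: algebra_simps)
        moreover have "AE t in Mm. snd v t - (a * complex_of_real mp) * (complex_of_real (1 / mm) * dl r t) = 0"
          using ab(2) by eventually_elim (simp add: b algebra_simps)
        ultimately have "veq v (vcomb {1} (\<lambda>_. a * complex_of_real mp) e)"
          by (simp add: vnull_def nullf_def vsub_def vcomb_def e_def)
        then show ?thesis by blast
      qed
      show "Dc z (e j) (e (Suc j))" if "1 \<le> j" "enat (Suc j) \<le> 1" for j
        using that by (simp add: one_enat_def)
      show "\<not> Dc z (e k) x" if k: "(1::enat) = enat k" for k x
      proof
        assume "Dc z (e k) x"
        then obtain c where c: "sok Mp z (fst x) (\<lambda>t. complex_of_real (1 / mp) * dl r t) c"
          "sok Mm z (snd x) (\<lambda>t. complex_of_real (1 / mm) * dl r t) c" by (auto simp: Dc_def e_def)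
        have cp: "complex_of_real (1 / mp) = - c" using P.sok_atom[OF ap zr c(1)] by simp
        have cm: "complex_of_real (1 / mm) = - c" using N.sok_atom[OF am zr c(2)] by simp
        have "mp = mm" using cp cm mp0 mm0 by (metis divide_cancel_left of_real_eq_iff zero_neq_one)
        have c0: "c \<noteq> 0" using cp mp0 by auto
        have Ls: "L2 M (pw z 1)" if "side M" "emeasure M {r} \<noteq> 0" "sok M z f (\<lambda>t. a * dl r t) c" for M f a
        proof -
          interpret side M by fact
          have ae: "AE t in M. t \<noteq> r \<longrightarrow> f t = (a * dl r t + c) * pw z 1 t" by (rule off2[OF zr that(2,3)])
          have Lf: "L2 M f" using that(3) by (simp add: sok_def)
          have Lg: "L2 M (\<lambda>t. (1 / c) * (f t - f r * dl r t))"
            by (intro L2_scale L2_diff Lf L2_dl[OF zr that(2)])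
          show ?thesis
          proof (rule L2_cong[OF Lg])
            show "pw z 1 \<in> borel_measurable M" by simp
            show "AE t in M. pw z 1 t = 1 / c * (f t - f r * dl r t)"
              using ae
            proof eventually_elim
              case (elim t)
              show ?case
              proof (cases "t = r")
                case True then show ?thesis using pw_r[OF zr that(2), of 1] by simp
              next
                case False then show ?thesis using elim c0 by simp
              qed
            qed
          qed
        qed
        have "C3" unfolding C3iff
          using \<open>mp = mm\<close> Ls[OF P.side_axioms ap c(1)] Ls[OF N.side_axioms am c(2)] by simp
        with False show False by simp
      qed
    qed
    have alg1: "alg_mult Mp Mm A z = 1" using chain.alg[OF ch] .
    show ?thesis using chain.eig[OF ch] chain.geom[OF ch] alg1 False by (simp add: simple_eig_def)
  next
    case True
    from True have mpm: "mp = mm" and L1: "L2 Mp (pw z 1)" "L2 Mm (pw z 1)" by (auto simp: C3iff)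
    define S2 where "S2 = {k. 2 \<le> k \<and> (\<forall>j::nat. 2 \<le> j \<and> enat j \<le> k - 1 \<longrightarrow> Q j)}"
    obtain K where K: "is_greatest S2 K" "2 \<le> K" "\<And>j. 2 \<le> j \<Longrightarrow> enat (Suc j) \<le> K \<Longrightarrow> Q j"
      "\<And>k. K = enat k \<Longrightarrow> \<not> Q k"
      using greatest2[of Q] unfolding S2_def by blast
    define q where "q j = (integral\<^sup>L Mm (pw z j) - integral\<^sup>L Mp (pw z j)) / complex_of_real mp" for j
    define e where "e j = (if j \<le> 1 then (dl r, dl r) else (Ef z r 0 (j - 1), Ef z r (q (j - 1)) (j - 1)))" for j
    have Lj: "L2 Mp (pw z j) \<and> L2 Mm (pw z j)" if "1 \<le> j" "enat (Suc j) \<le> K" for j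
    proof (cases "j = 1")
      case True then show ?thesis using L1 by simp
    next
      case False
      then have "Q j" using that K(3) by auto
      then show ?thesis using Qiff False that by auto
    qed
    have ipj: "integrable Mp (pw z j) \<and> integrable Mm (pw z j)" if "1 \<le> j" "enat (Suc j) \<le> K" for j
    proof -
      define i where "i = j - 1"
      have i: "j = Suc i" using that(1) by (simp add: i_def)
      have ej: "enat j \<le> K" using that(2) by (meson Suc_ile_eq order_less_imp_le)
      have prev: "L2 Mp (pw z i) \<and> L2 Mm (pw z i)" if "i \<noteq> 0"
      proof (rule Lj)
        show "1 \<le> i" using that by simp
        show "enat (Suc i) \<le> K" using ej i by simp
      qed
      have Ljj: "L2 Mp (pw z (Suc i))" "L2 Mm (pw z (Suc i))" using Lj[OF that] i by auto
      have "integrable Mp (pw z (Suc i))" by (rule P.int_pw2[OF zr ap Ljj(1)]) (use prev in blast)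
      moreover have "integrable Mm (pw z (Suc i))" by (rule N.int_pw2[OF zr am Ljj(2)]) (use prev in blast)
      ultimately show ?thesis using i by simp
    qed
    have qj0: "q (j - 1) = 0" if "2 \<le> j" "enat (Suc j) \<le> K" for j
    proof -
      have "Q j" using K(3) that by blast
      then show ?thesis using Qiff[OF that(1)] by (simp add: q_def)
    qed
    have m0: "complex_of_real mp \<noteq> 0" using mp0 by simp
    have ch: "chain Mp Mm A z e K"
    proof (rule chain.intro[OF two_axioms], rule chain_axioms.intro)
      show "1 \<le> K" using K(2) by (metis one_le_numeral order_trans)
      show "Dc z vzero (e 1)"
        unfolding Dc_def e_def vzero_def
        using P.sok_dl[OF zr ap, of 1] N.sok_dl[OF zr am, of 1] P.integral_dl[OF zr ap] N.integral_dl[OF zr am] mpm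
        by (intro exI[of _ 0]) (simp add: mp_def mm_def)
      show "\<not> vn (e 1)" using not_null_dl[of 1 "dl r"] by (simp add: e_def)
      show "\<exists>\<alpha>. veq v (vcomb {1} (\<lambda>_. \<alpha>) e)" if "Dc z vzero v" for v
      proof -
        from eigv[OF that] obtain a b where ab: "AE t in Mp. fst v t = a * dl r t" "AE t in Mm. snd v t = b * dl r t"
          "a * complex_of_real mp = b * complex_of_real mm" by blast
        have "b = a" using ab(3) mpm m0 by simp
        then have "veq v (vcomb {1} (\<lambda>_. a) e)"
          using ab(1,2) by (auto simp: vnull_def nullf_def vsub_def vcomb_def e_def elim!: eventually_mono)
        then show ?thesis by blast
      qed
      show "Dc z (e j) (e (Suc j))" if j: "1 \<le> j" "enat (Suc j) \<le> K" for j
      proof -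
        have es: "e (Suc j) = (Ef z r 0 j, Ef z r (q j) j)" using j(1) by (simp add: e_def)
        have L: "L2 Mp (pw z j)" "L2 Mm (pw z j)" using Lj[OF j] by auto
        have I: "integrable Mp (pw z j)" "integrable Mm (pw z j)" using ipj[OF j] by auto
        have ieq: "integral\<^sup>L Mp (Ef z r 0 j) = integral\<^sup>L Mm (Ef z r (q j) j)"
          using P.intE[OF zr ap I(1), of 0] N.intE[OF zr am I(2), of "q j"] mpm m0
          by (simp add: q_def mm_def[symmetric])
        show ?thesis
        proof (cases "j = 1")
          case True
          have "e j = (dl r, dl r)" using True by (simp add: e_def)
          then show ?thesis unfolding Dc_def es fst_conv snd_conv
            using P.sokE1[OF zr ap, of 0] N.sokE1[OF zr am, of "q j"] L True ieq by (intro exI[of _ "-1"]) simp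
        next
          case False
          define i where "i = j - 1"
          have i: "j = Suc i" "1 \<le> i" using False j(1) by (auto simp: i_def)
          have "q (j - 1) = 0" using qj0[of j] False j by simp
          then have ej: "e j = (Ef z r 0 i, Ef z r 0 i)" using False j(1) by (simp add: e_def i_def)
          have "enat (Suc i) \<le> K" using j(2) unfolding i(1) by (meson Suc_ile_eq order_less_imp_le)
          then have Li: "L2 Mp (pw z i)" "L2 Mm (pw z i)" using Lj[of i] i(2) by auto
          show ?thesis unfolding Dc_def es ej fst_conv snd_conv
            using P.sokE2[OF zr ap i(2) Li(1), of 0] N.sokE2[OF zr am i(2) Li(2), of "q j"] L i ieq
            by (intro exI[of _ 0]) simp
        qed
      qed
      show "\<not> Dc z (e k) x" if k: "K = enat k" for k x
      proof
        assume D: "Dc z (e k) x"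
        have k2: "2 \<le> k" using K(2) k by (simp add: numeral_eq_enat)
        define i where "i = k - 1"
        have i: "k = Suc i" "1 \<le> i" using k2 by (auto simp: i_def)
        have ek: "e k = (Ef z r 0 i, Ef z r (q i) i)" using k2 by (simp add: e_def i_def)
        from D obtain c where c: "sok Mp z (fst x) (Ef z r 0 i) c" "sok Mm z (snd x) (Ef z r (q i) i) c"
          by (auto simp: Dc_def ek)
        have "Ef z r 0 i r = - c" using P.sok_atom[OF ap zr c(1)] .
        then have c0: "c = 0" using P.pw_r[OF zr ap i(2)] by (simp add: Ef_def)
        have "Ef z r (q i) i r = - c" using N.sok_atom[OF am zr c(2)] .
        then have "q i = 0" using P.pw_r[OF zr ap i(2)] c0 by (simp add: Ef_def)
        then have ieq: "integral\<^sup>L Mm (pw z i) = integral\<^sup>L Mp (pw z i)" using m0 by (simp add: q_def)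
        have Ls: "L2 M (pw z (Suc i))" if "side M" "emeasure M {r} \<noteq> 0" "sok M z f (Ef z r q' i) 0" for M f q'
        proof -
          interpret side M by fact
          have ae: "AE t in M. t \<noteq> r \<longrightarrow> f t = (Ef z r q' i t + 0) * pw z 1 t" by (rule off2[OF zr that(2,3)])
          have Lf: "L2 M f" using that(3) by (simp add: sok_def)
          have Lg: "L2 M (\<lambda>t. - (f t - f r * dl r t))"
            by (intro L2_uminus L2_diff Lf L2_scale L2_dl[OF zr that(2)])
          show ?thesis
          proof (rule L2_cong[OF Lg])
            show "pw z (Suc i) \<in> borel_measurable M" by simp
            show "AE t in M. pw z (Suc i) t = - (f t - f r * dl r t)"
              using ae
            proof eventually_elim
              case (elim t)
              show ?case
              proof (cases "t = r")
                case True then show ?thesis using pw_r[OF zr that(2), of "Suc i"] by simp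
              next
                case False then show ?thesis using elim pw_mult[of z i t] by (simp add: Ef_def)
              qed
            qed
          qed
        qed
        have "Q k" using Qiff[OF k2] i(1)
          using Ls[OF P.side_axioms ap c(1)[unfolded c0]] Ls[OF N.side_axioms am c(2)[unfolded c0]] ieq by simp
        with K(4)[OF k] show False by simp
      qed
    qed
    have algK: "alg_mult Mp Mm A z = K" using chain.alg[OF ch] .
    have "alg_mult Mp Mm A z \<noteq> 1" using algK K(2) by (auto simp: one_enat_def numeral_eq_enat)
    then show ?thesis using chain.eig[OF ch] chain.geom[OF ch] algK K(1) True
      by (simp add: simple_eig_def S2_def)
  qed
qed

end

theorem theorem3p1:
  fixes Sp Sm :: "real \<Rightarrow> real" and Cp Cm :: real
  defines "Mp \<equiv> LS_measure Sp" and "Mm \<equiv> LS_measure Sm"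
      and "A \<equiv> Ahat Sp Cp Sm Cm"
  assumes hp: "admissible Sp Cp" and hm: "admissible Sm Cm"
  shows
   "(\<forall>z. z \<in> A0 Mp \<union> A0 Mm \<longrightarrow> z \<notin> op_sigma_p Mp Mm A)
  \<and> (\<forall>z. z \<in> Ap Mp \<inter> Ap Mm \<longrightarrow>
       (z \<in> op_sigma_p Mp Mm A \<and> geom_mult Mp Mm A z = 1)
     \<and> (simple_eig Mp Mm A z \<longleftrightarrow>
          \<not> (emeasure Mm {t. complex_of_real t = z} = emeasure Mp {t. complex_of_real t = z}
             \<and> (\<integral>\<^sup>+ t. indicator {t. complex_of_real t \<noteq> z} t
                    * ennreal (1 / (cmod (complex_of_real t - z))^2) \<partial>Mp) < \<infinity>
             \<and> (\<integral>\<^sup>+ t. indicator {t. complex_of_real t \<noteq> z} t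
                    * ennreal (1 / (cmod (complex_of_real t - z))^2) \<partial>Mm) < \<infinity>))
     \<and> ((emeasure Mm {t. complex_of_real t = z} = emeasure Mp {t. complex_of_real t = z}
             \<and> (\<integral>\<^sup>+ t. indicator {t. complex_of_real t \<noteq> z} t
                    * ennreal (1 / (cmod (complex_of_real t - z))^2) \<partial>Mp) < \<infinity>
             \<and> (\<integral>\<^sup>+ t. indicator {t. complex_of_real t \<noteq> z} t
                    * ennreal (1 / (cmod (complex_of_real t - z))^2) \<partial>Mm) < \<infinity>)
        \<longrightarrow> is_greatest
              {k :: enat. 2 \<le> k \<and> (\<forall>j::nat. 2 \<le> j \<and> enat j \<le> k - 1 \<longrightarrow>
                  (\<integral>\<^sup>+ t. indicator {t. complex_of_real t \<noteq> z} t
                      * ennreal (1 / (cmod (complex_of_real t - z))^(2*j)) \<partial>Mp) < \<infinity>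
                \<and> (\<integral>\<^sup>+ t. indicator {t. complex_of_real t \<noteq> z} t
                      * ennreal (1 / (cmod (complex_of_real t - z))^(2*j)) \<partial>Mm) < \<infinity>
                \<and> set_lebesgue_integral Mm {t. complex_of_real t \<noteq> z}
                      (\<lambda>t. 1 / (complex_of_real t - z)^(j-1))
                  = set_lebesgue_integral Mp {t. complex_of_real t \<noteq> z}
                      (\<lambda>t. 1 / (complex_of_real t - z)^(j-1)))}
              (alg_mult Mp Mm A z)))
  \<and> (\<forall>z. z \<in> Ar Mp \<inter> Ar Mm \<longrightarrow>
       (z \<in> op_sigma_p Mp Mm A \<longleftrightarrow>
          (\<integral> t. 1 / (complex_of_real t - z) \<partial>Mp) = (\<integral> t. 1 / (complex_of_real t - z) \<partial>Mm))
     \<and> (z \<in> op_sigma_p Mp Mm A \<longrightarrow>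
          geom_mult Mp Mm A z = 1
        \<and> is_greatest
              {k :: enat. 1 \<le> k \<and> (\<forall>j::nat. 1 \<le> j \<and> enat j \<le> k \<longrightarrow>
                  (\<integral>\<^sup>+ t. ennreal (1 / (cmod (complex_of_real t - z))^(2*j)) \<partial>Mp) < \<infinity>
                \<and> (\<integral>\<^sup>+ t. ennreal (1 / (cmod (complex_of_real t - z))^(2*j)) \<partial>Mm) < \<infinity>
                \<and> (\<integral> t. 1 / (complex_of_real t - z)^j \<partial>Mm)
                  = (\<integral> t. 1 / (complex_of_real t - z)^j \<partial>Mp))}
              (alg_mult Mp Mm A z)))
  \<and> (\<forall>z. z \<in> (Ap Mp \<inter> Ar Mm) \<union> (Ap Mm \<inter> Ar Mp) \<longrightarrow> z \<notin> op_sigma_p Mp Mm A)"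
proof -
  have sp: "side Mp" using hp unfolding Mp_def admissible_def side_def LS_measure_def by simp
  have sm: "side Mm" using hm unfolding Mm_def admissible_def side_def LS_measure_def by simp
  have cp: "Cp = (\<integral> t. t / (1 + t^2) \<partial>LS_measure Sp)" using hp by (simp add: admissible_def)
  have cm: "Cm = (\<integral> t. t / (1 + t^2) \<partial>LS_measure Sm)" using hm by (simp add: admissible_def)
  have tw: "two Mp Mm A"
  proof (rule two.intro[OF sp sm], rule two_axioms.intro)
    fix fp fm gp gm
    show "((fp, fm), gp, gm) \<in> A \<longleftrightarrow>
      (\<exists>c. rel Mp fp gp c \<and> rel Mm fm gm c \<and> integral\<^sup>L Mp fp = integral\<^sup>L Mm fm)"
      unfolding A_def Mp_def Mm_def
      by (rule Ahat_char[OF sp[unfolded Mp_def] sm[unfolded Mm_def] cp cm])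
  qed
  show ?thesis
    apply (intro conjI)
    subgoal using two.part1[OF tw] by blast
    subgoal using two.part2[OF tw] by blast
    subgoal using two.part3[OF tw] by blast
    subgoal using two.part4[OF tw] by blast
    done
qed

end
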